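(* For $n\ge 1$, $$\sum_{\pi\in\mathfrak{S}_n}q^{{\rm altmaj}(\pi)}=\widehat{E}_n(q)\prod_{k=1}^{\lfloor\log_2 n\rfloor}\prod_{i=1}^{\lfloor n/2^k \rfloor}(1+q^i),$$ where $\widehat{E}_n(q)$ is a palindromic polynomial in $\mathbb{Z}[q]$ whose constant term is the Euler number $E_n$.
   Context: $\mathfrak{S}_n$ is the set of permutations $\pi=\pi_1\cdots\pi_n$ of $\{1,\dots,n\}$. The alternating descent set is $\widehat{D}(\pi)=\{2i:\pi_{2i}<\pi_{2i+1}\}\cup\{2i+1:\pi_{2i+1}>\pi_{2i+2}\}$ (indices in $\{1,\dots,n-1\}$), and the alternating major index is ${\rm altmaj}(\pi)=\sum_{i\in\widehat{D}(\pi)}i$. The Euler number $E_n$ is the number of down-up permutations $\pi\in\mathfrak{S}_n$, i.e. $\pi_1>\pi_2<\pi_3>\pi_4<\cdots$. A polynomial $f$ of degree $d$ is palindromic if $f(q)=q^df(1/q)$. *)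

theory Defs
  imports Complex_Main "HOL-Combinatorics.Permutations" "HOL-Computational_Algebra.Polynomial"
begin

(* A permutation pi of {1..n} is a function p with p permutes {1..n}; pi_i = p i. *)

definition alt_descent_set :: "nat \<Rightarrow> (nat \<Rightarrow> nat) \<Rightarrow> nat set" where
  "alt_descent_set n p =
     {i \<in> {1..n-1}. (even i \<and> p i < p (i+1)) \<or> (odd i \<and> p i > p (i+1))}"

definition altmaj :: "nat \<Rightarrow> (nat \<Rightarrow> nat) \<Rightarrow> nat" where
  "altmaj n p = (\<Sum>i\<in>alt_descent_set n p. i)"

definition down_up :: "nat \<Rightarrow> (nat \<Rightarrow> nat) \<Rightarrow> bool" where
  "down_up n p \<longleftrightarrow> (\<forall>i\<in>{1..n-1}. (odd i \<longrightarrow> p i > p (i+1)) \<and> (even i \<longrightarrow> p i < p (i+1)))"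

definition euler_number :: "nat \<Rightarrow> nat" where
  "euler_number n = card {p. p permutes {1..n} \<and> down_up n p}"

definition palindromic :: "'a::zero poly \<Rightarrow> bool" where
  "palindromic f \<longleftrightarrow> (\<forall>i\<le>degree f. coeff f i = coeff f (degree f - i))"

end

theory Submission
  imports Defs "HOL-Combinatorics.Multiset_Permutations"
    "HOL-Computational_Algebra.Formal_Power_Series"
    "HOL-Computational_Algebra.Polynomial_Factorial"
begin

definition adesc :: "nat \<Rightarrow> nat list \<Rightarrow> nat \<Rightarrow> bool" where
  "adesc d ws i \<longleftrightarrow> (even (d+i) \<and> ws!(i-1) < ws!i) \<or> (odd (d+i) \<and> ws!(i-1) > ws!i)"

definition af :: "nat \<Rightarrow> nat list \<Rightarrow> bool" where
  "af d ws \<longleftrightarrow> (\<forall>i. 0 < i \<and> i < length ws \<longrightarrow> \<not> adesc d ws i)"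

definition gaf :: "nat \<Rightarrow> nat list \<Rightarrow> bool" where
  "gaf t ws \<longleftrightarrow> (\<forall>i. t < i \<and> i < length ws \<longrightarrow> \<not> adesc 0 ws i)"

definition lam :: "nat list \<Rightarrow> nat" where
  "lam ws = (\<Sum>i\<in>{i. 0 < i \<and> i < length ws \<and> adesc 0 ws i}. i)"

lemma adesc_snoc: "0 < i \<Longrightarrow> i < length ws \<Longrightarrow> adesc d (ws @ [x]) i = adesc d ws i"
  by (auto simp add: adesc_def nth_append)

lemma lam_single[simp]: "lam [x] = 0"
  unfolding lam_def by auto

lemma lam_Nil[simp]: "lam [] = 0"
  unfolding lam_def by auto

lemma adesc_tt: "adesc (t + t) ws i = adesc 0 ws i"
  by (simp add: adesc_def)

lemma adesc_take: "0 < i \<Longrightarrow> i < t \<Longrightarrow> i < length ws \<Longrightarrow> adesc d (take t ws) i = adesc d ws i"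
  by (simp add: adesc_def)

lemma adesc_drop: "0 < i \<Longrightarrow> t + i < length ws \<Longrightarrow> adesc d (drop t ws) i = adesc (d + t) ws (t + i)"
proof -
  assume a: "0 < i" "t + i < length ws"
  then have "t + i - 1 = t + (i - 1)" by simp
  then show ?thesis using a by (simp add: adesc_def add.assoc add.commute add.left_commute)
qed

lemma gaf_af_drop: "t \<le> length ws \<Longrightarrow> gaf t ws = af t (drop t ws)"
  unfolding gaf_def af_def
proof safe
  fix i assume "t \<le> length ws" "\<forall>i. t < i \<and> i < length ws \<longrightarrow> \<not> adesc 0 ws i"
    "0 < i" "i < length (drop t ws)" "adesc t (drop t ws) i"
  then show False using adesc_drop[of i t ws t] by (auto simp: add.commute adesc_tt)
next
  fix i assume "t \<le> length ws" "\<forall>i. 0 < i \<and> i < length (drop t ws) \<longrightarrow> \<not> adesc t (drop t ws) i"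
    "t < i" "i < length ws" "adesc 0 ws i"
  then show False using adesc_drop[of "i - t" t ws t] by (auto simp: adesc_tt)
qed

lemma lam_snoc:
  assumes "ws \<noteq> []"
  shows "lam (ws @ [x]) = lam ws + (if adesc 0 (ws @ [x]) (length ws) then length ws else 0)"
proof -
  let ?A = "{i. 0 < i \<and> i < length ws \<and> adesc 0 ws i}"
  have fin: "finite ?A" by simp
  have eq: "{i. 0 < i \<and> i < length (ws @ [x]) \<and> adesc 0 (ws @ [x]) i} =
        ?A \<union> (if adesc 0 (ws @ [x]) (length ws) then {length ws} else {})"
    using assms by (auto simp: adesc_snoc less_Suc_eq)
  show ?thesis
    unfolding lam_def eq using fin by (auto simp: sum.union_disjoint)
qed

lemma lam_take_snoc: "t \<le> length ws \<Longrightarrow> lam (take t (ws @ [x])) = lam (take t ws)"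
  by simp

lemma gaf_snoc: "t < length ws \<Longrightarrow>
   gaf t (ws @ [x]) = (gaf t ws \<and> \<not> adesc 0 (ws @ [x]) (length ws))"
  unfolding gaf_def by (auto simp: adesc_snoc less_Suc_eq)

lemma telescope_prod:
  fixes q :: "'a::comm_ring_1"
  assumes "t < m"
  shows "(\<Prod>i\<in>{t<..<Suc m}. 1 - q^i) = (1 - q^m) * (\<Prod>i\<in>{t<..<m}. 1 - q^i)"
proof -
  have "{t<..<Suc m} = insert m {t<..<m}" using assms by auto
  then show ?thesis by simp
qed

lemma key_pointwise:
  fixes q :: "'a::comm_ring_1"
  shows "ws \<noteq> [] \<Longrightarrow> q ^ lam ws = (\<Sum>t<length ws. (if gaf t ws then 1 else 0) *
        (\<Prod>i\<in>{t<..<length ws}. 1 - q^i) * q^t * q ^ lam (take t ws))"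
proof (induction ws rule: rev_induct)
  case Nil
  then show ?case by simp
next
  case (snoc x ws)
  show ?case
  proof (cases "ws = []")
    case True
    then show ?thesis by (simp add: gaf_def)
  next
    case False
    let ?m = "length ws"
    let ?ad = "adesc 0 (ws @ [x]) ?m"
    have IH: "q ^ lam ws = (\<Sum>t<?m. (if gaf t ws then 1 else 0) *
        (\<Prod>i\<in>{t<..<?m}. 1 - q^i) * q^t * q ^ lam (take t ws))"
      using snoc.IH False by simp
    have lastt: "gaf ?m (ws @ [x])" by (auto simp add: gaf_def)
    have split: "(\<Sum>t<length (ws@[x]). (if gaf t (ws@[x]) then 1 else 0) *
        (\<Prod>i\<in>{t<..<length (ws@[x])}. 1 - q^i) * q^t * q ^ lam (take t (ws@[x])))
      = (\<Sum>t<?m. (if gaf t (ws@[x]) then 1 else 0) *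
        (\<Prod>i\<in>{t<..<Suc ?m}. 1 - q^i) * q^t * q ^ lam (take t (ws@[x])))
        + q^?m * q ^ lam ws"
    proof -
      have "{?m<..<Suc ?m} = {}" by auto
      then show ?thesis using lastt by simp
    qed
    have inner: "(\<Sum>t<?m. (if gaf t (ws@[x]) then 1 else 0) *
        (\<Prod>i\<in>{t<..<Suc ?m}. 1 - q^i) * q^t * q ^ lam (take t (ws@[x])))
      = (if ?ad then 0 else (1 - q^?m)) * (\<Sum>t<?m. (if gaf t ws then 1 else 0) *
        (\<Prod>i\<in>{t<..<?m}. 1 - q^i) * q^t * q ^ lam (take t ws))"
      unfolding sum_distrib_left
      by (rule sum.cong) (auto simp: gaf_snoc telescope_prod)
    show ?thesis
      using False
      unfolding split inner IH[symmetric] by (auto simp: lam_snoc power_add algebra_simps)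
  qed
qed


abbreviation perms :: "nat set \<Rightarrow> nat list set" where "perms \<equiv> permutations_of_set"

lemma adesc_map_mono:
  assumes "strict_mono_on A f" "set ws \<subseteq> A" "0 < i" "i < length ws"
  shows "adesc d (map f ws) i = adesc d ws i"
proof -
  have a: "ws!(i-1) \<in> A" "ws!i \<in> A" using assms by (auto simp: subset_iff)
  show ?thesis using assms(3,4) strict_mono_on_less[OF assms(1) a] strict_mono_on_less[OF assms(1) a(2,1)]
    by (auto simp: adesc_def)
qed

lemma lam_map_mono:
  assumes "strict_mono_on A f" "set ws \<subseteq> A"
  shows "lam (map f ws) = lam ws"
proof -
  have "\<And>i. 0 < i \<Longrightarrow> i < length ws \<Longrightarrow> adesc 0 (map f ws) i = adesc 0 ws i"
    by (rule adesc_map_mono[where A=A]) (use assms in auto)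
  then have "{i. 0 < i \<and> i < length (map f ws) \<and> adesc 0 (map f ws) i} = {i. 0 < i \<and> i < length ws \<and> adesc 0 ws i}"
    by auto
  then show ?thesis unfolding lam_def by simp
qed

lemma af_map_mono:
  assumes "strict_mono_on A f" "set ws \<subseteq> A"
  shows "af d (map f ws) = af d ws"
proof -
  have "\<And>i. 0 < i \<Longrightarrow> i < length ws \<Longrightarrow> adesc d (map f ws) i = adesc d ws i"
    by (rule adesc_map_mono[where A=A]) (use assms in auto)
  then show ?thesis unfolding af_def by auto
qed

lemma adesc_map_anti:
  fixes f :: "nat \<Rightarrow> nat"
  assumes "\<And>x y. x \<in> A \<Longrightarrow> y \<in> A \<Longrightarrow> x < y \<Longrightarrow> f y < f x" "set ws \<subseteq> A" "distinct ws" "0 < i" "i < length ws"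
  shows "adesc d (map f ws) i = adesc (Suc d) ws i"
proof -
  have a: "ws!(i-1) \<in> A" "ws!i \<in> A" using assms by (auto simp: subset_iff)
  have ne: "ws!(i-1) \<noteq> ws!i" using assms(3,4,5) by (simp add: nth_eq_iff_index_eq)
  show ?thesis using assms(4,5) assms(1)[OF a] assms(1)[OF a(2,1)] ne
    by (auto simp: adesc_def)
qed

lemma af_map_anti:
  fixes f :: "nat \<Rightarrow> nat"
  assumes "\<And>x y. x \<in> A \<Longrightarrow> y \<in> A \<Longrightarrow> x < y \<Longrightarrow> f y < f x" "set ws \<subseteq> A" "distinct ws"
  shows "af d (map f ws) = af (Suc d) ws"
proof -
  have "\<And>i. 0 < i \<Longrightarrow> i < length ws \<Longrightarrow> adesc d (map f ws) i = adesc (Suc d) ws i"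
    by (rule adesc_map_anti[where A=A]) (use assms in auto)
  then show ?thesis unfolding af_def by auto
qed

lemma sum_perms_image:
  assumes "inj_on f A"
  shows "(\<Sum>ws\<in>perms (f ` A). g ws) = (\<Sum>ws\<in>perms A. g (map f ws))"
proof -
  have "inj_on (map f) (perms A)"
    using assms by (auto simp: inj_on_def permutations_of_set_def map_inj_on)
  then show ?thesis
    by (simp add: permutations_of_set_image_inj[OF assms] sum.reindex)
qed

lemma iso_exists:
  fixes K :: "nat set"
  assumes "finite K"
  shows "\<exists>f::nat\<Rightarrow>nat. strict_mono_on {1..card K} f \<and> f ` {1..card K} = K"
proof -
  let ?L = "sorted_list_of_set K"
  define f where "f i = ?L ! (i - 1)" for i
  have sl: "sorted_wrt (<) ?L" by (simp add: strict_sorted_list_of_set)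
  have len: "length ?L = card K" by simp
  have "strict_mono_on {1..card K} f"
  proof (rule strict_mono_onI)
    fix r s assume "r \<in> {1..card K}" "s \<in> {1..card K}" "r < s"
    then show "f r < f s" unfolding f_def using sorted_wrt_nth_less[OF sl, of "r-1" "s-1"] len by auto
  qed
  moreover have "f ` {1..card K} = K"
  proof -
    have "f ` {1..card K} = set ?L"
    proof safe
      fix i assume "i \<in> {1..card K}"
      then show "f i \<in> set ?L" unfolding f_def using len by auto
    next
      fix x assume "x \<in> set ?L"
      then obtain i where i: "i < length ?L" "x = ?L ! i" by (auto simp: in_set_conv_nth)
      then have "x = f (Suc i)" "Suc i \<in> {1..card K}" using len unfolding f_def by auto
      then show "x \<in> f ` {1..card K}" by blast
    qed
    then show ?thesis using assms by simp
  qed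
  ultimately show ?thesis by blast
qed

definition Al :: "nat set \<Rightarrow> 'a::comm_ring_1 \<Rightarrow> 'a" where
  "Al K q = (\<Sum>ws\<in>perms K. q ^ lam ws)"

definition Ec :: "nat \<Rightarrow> nat set \<Rightarrow> nat" where
  "Ec d K = (\<Sum>ws\<in>perms K. if af d ws then 1 else 0)"

definition EE :: "nat \<Rightarrow> nat" where "EE n = Ec 1 {1..n}"

lemma perms_subset: "ws \<in> perms A \<Longrightarrow> set ws \<subseteq> A"
  by (simp add: permutations_of_set_def)

lemma Al_iso: "finite K \<Longrightarrow> Al K q = Al {1..card K} q"
proof -
  assume "finite K"
  then obtain f where f: "strict_mono_on {1..card K} f" "f ` {1..card K} = K"
    using iso_exists by blast
  have inj: "inj_on f {1..card K}" using f(1) strict_mono_on_imp_inj_on by blast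
  have "Al K q = (\<Sum>ws\<in>perms (f ` {1..card K}). q ^ lam ws)" using f(2) by (simp add: Al_def)
  also have "\<dots> = (\<Sum>ws\<in>perms {1..card K}. q ^ lam (map f ws))" by (rule sum_perms_image[OF inj])
  also have "\<dots> = Al {1..card K} q" unfolding Al_def
    by (rule sum.cong) (auto simp: lam_map_mono[OF f(1) perms_subset])
  finally show ?thesis .
qed

lemma Ec_iso: "finite K \<Longrightarrow> Ec d K = Ec d {1..card K}"
proof -
  assume "finite K"
  then obtain f where f: "strict_mono_on {1..card K} f" "f ` {1..card K} = K"
    using iso_exists by blast
  have inj: "inj_on f {1..card K}" using f(1) strict_mono_on_imp_inj_on by blast
  have "Ec d K = (\<Sum>ws\<in>perms (f ` {1..card K}). if af d ws then 1 else 0)" using f(2) by (simp add: Ec_def)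
  also have "\<dots> = (\<Sum>ws\<in>perms {1..card K}. if af d (map f ws) then 1 else 0)" by (rule sum_perms_image[OF inj])
  also have "\<dots> = Ec d {1..card K}" unfolding Ec_def
    by (rule sum.cong) (auto simp: af_map_mono[OF f(1) perms_subset])
  finally show ?thesis .
qed

lemma Ec_flip: "Ec d {1..t} = Ec (Suc d) {1..t}"
proof -
  define r where "r x = Suc t - x" for x :: nat
  have img: "r ` {1..t} = {1..t}"
  proof safe
    fix x assume "x \<in> {1..t}" then show "r x \<in> {1..t}" by (auto simp: r_def)
  next
    fix x assume x: "x \<in> {1..t}"
    then have "x = r (r x)" "r x \<in> {1..t}" by (auto simp: r_def)
    then show "x \<in> r ` {1..t}" by blast
  qed
  have inj: "inj_on r {1..t}" by (auto simp: inj_on_def r_def)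
  have anti: "\<And>x y. x \<in> {1..t} \<Longrightarrow> y \<in> {1..t} \<Longrightarrow> x < y \<Longrightarrow> r y < r x"
    by (auto simp: r_def)
  have "Ec d {1..t} = (\<Sum>ws\<in>perms (r ` {1..t}). if af d ws then 1 else 0)" using img by (simp add: Ec_def)
  also have "\<dots> = (\<Sum>ws\<in>perms {1..t}. if af d (map r ws) then 1 else 0)" by (rule sum_perms_image[OF inj])
  also have "\<dots> = Ec (Suc d) {1..t}" unfolding Ec_def
  proof (rule sum.cong)
    fix ws assume ws: "ws \<in> perms {1..t}"
    have "af d (map r ws) = af (Suc d) ws"
      by (rule af_map_anti[where A="{1..t}"]) (use anti ws in \<open>auto simp: permutations_of_set_def\<close>)
    then show "(if af d (map r ws) then 1 else 0) = (if af (Suc d) ws then 1 else (0::nat))" by simp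
  qed simp
  finally show ?thesis .
qed

lemma af_plus2: "af (Suc (Suc d)) ws = af d ws"
  by (simp add: af_def adesc_def)

lemma Ec_EE_aux: "Ec d {1..t} = Ec 1 {1..t}"
proof (induction d rule: nat_less_induct)
  case (1 d)
  show ?case
  proof (cases d)
    case 0 then show ?thesis using Ec_flip[of 0 t] by simp
  next
    case (Suc d')
    show ?thesis
    proof (cases d')
      case 0 then show ?thesis using Suc by simp
    next
      case (Suc d'')
      have "Ec d {1..t} = Ec d'' {1..t}" using \<open>d = Suc d'\<close> Suc by (simp add: Ec_def af_plus2)
      moreover have "d'' < d" using \<open>d = Suc d'\<close> Suc by simp
      ultimately show ?thesis using 1 by metis
    qed
  qed
qed

lemma Ec_EE: "finite K \<Longrightarrow> Ec d K = EE (card K)"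
  using Ec_iso Ec_EE_aux EE_def by metis


lemma split_sum:
  fixes G :: "nat list \<Rightarrow> nat list \<Rightarrow> 'a::comm_monoid_add"
  assumes S: "finite S" and k: "k \<le> card S"
  shows "(\<Sum>ws\<in>perms S. G (take k ws) (drop k ws)) =
         (\<Sum>K\<in>{K. K \<subseteq> S \<and> card K = k}. \<Sum>xs\<in>perms K. \<Sum>ys\<in>perms (S - K). G xs ys)"
proof -
  let ?I = "{K. K \<subseteq> S \<and> card K = k}"
  let ?Z = "\<Union>K\<in>?I. perms K \<times> perms (S - K)"
  define h where "h ws = (take k ws, drop k ws)" for ws :: "nat list"
  have bij: "bij_betw h (perms S) ?Z"
  proof (rule bij_betw_imageI)
    show "inj_on h (perms S)"
      by (rule inj_onI) (metis h_def append_take_drop_id prod.inject)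
    show "h ` perms S = ?Z"
    proof (rule set_eqI, rule iffI)
      fix p assume "p \<in> h ` perms S"
      then obtain ws where ws: "ws \<in> perms S" and p: "p = h ws" by blast
      have len: "length ws = card S" using ws by (rule length_finite_permutations_of_set)
      have d: "distinct ws" "set ws = S" using ws by (auto simp: permutations_of_set_def)
      let ?K = "set (take k ws)"
      have "?K \<subseteq> S" using d set_take_subset by metis
      moreover have "card ?K = k" using d len k by (simp add: distinct_card min_def)
      moreover have "take k ws \<in> perms ?K" using d by (auto simp: permutations_of_set_def)
      moreover have "drop k ws \<in> perms (S - ?K)"
      proof -
        have u: "set ws = ?K \<union> set (drop k ws)" by (metis append_take_drop_id set_append)
        have i: "?K \<inter> set (drop k ws) = {}" using d(1) set_take_disj_set_drop_if_distinct[of ws k k] by simp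
        have "set (drop k ws) = S - ?K" using u i d(2) by blast
        then show ?thesis using d by (auto simp: permutations_of_set_def)
      qed
      ultimately show "p \<in> ?Z" unfolding h_def p by blast
    next
      fix p assume "p \<in> ?Z"
      then obtain xs ys K where K: "K \<in> ?I" and xs: "xs \<in> perms K" and ys: "ys \<in> perms (S - K)"
        and p: "p = (xs, ys)" by blast
      have lx: "length xs = k" using xs K length_finite_permutations_of_set by fastforce
      have "xs @ ys \<in> perms S"
        using xs ys K by (auto simp: permutations_of_set_def)
      moreover have "h (xs @ ys) = (xs, ys)" unfolding h_def using lx by simp
      ultimately show "p \<in> h ` perms S" unfolding p by force
    qed
  qed
  have "(\<Sum>ws\<in>perms S. G (take k ws) (drop k ws)) = (\<Sum>ws\<in>perms S. case_prod G (h ws))"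
    by (simp add: h_def)
  also have "\<dots> = (\<Sum>p\<in>?Z. case_prod G p)" by (rule sum.reindex_bij_betw[OF bij])
  also have "\<dots> = (\<Sum>K\<in>?I. \<Sum>p\<in>perms K \<times> perms (S - K). case_prod G p)"
  proof (rule sum.UNION_disjoint)
    have "?I \<subseteq> Pow S" by auto
    then show "finite ?I" using S by (simp add: finite_subset)
    show "\<forall>K\<in>?I. finite (perms K \<times> perms (S - K))" by simp
    show "\<forall>K\<in>?I. \<forall>K'\<in>?I. K \<noteq> K' \<longrightarrow> (perms K \<times> perms (S - K)) \<inter> (perms K' \<times> perms (S - K')) = {}"
      by (auto simp: permutations_of_set_def)
  qed
  also have "\<dots> = (\<Sum>K\<in>?I. \<Sum>xs\<in>perms K. \<Sum>ys\<in>perms (S - K). G xs ys)"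
    by (simp add: sum.cartesian_product)
  finally show ?thesis .
qed


lemma inner_split:
  fixes q :: "'a::comm_ring_1"
  assumes t: "t \<le> n"
  shows "(\<Sum>ws\<in>perms {1..n}. (if gaf t ws then 1 else 0) * q ^ lam (take t ws))
       = of_nat (n choose t) * of_nat (EE (n - t)) * Al {1..t} q"
proof -
  let ?S = "{1..n}"
  have "(\<Sum>ws\<in>perms ?S. (if gaf t ws then 1 else 0) * q ^ lam (take t ws))
      = (\<Sum>ws\<in>perms ?S. (\<lambda>xs ys. q ^ lam xs * (if af t ys then 1 else 0)) (take t ws) (drop t ws))"
  proof (rule sum.cong)
    fix ws assume "ws \<in> perms ?S"
    then have "length ws = n" using length_finite_permutations_of_set by fastforce
    then show "(if gaf t ws then 1 else 0) * q ^ lam (take t ws) =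
       (\<lambda>xs ys. q ^ lam xs * (if af t ys then 1 else 0)) (take t ws) (drop t ws)"
      using t gaf_af_drop[of t ws] by simp
  qed simp
  also have "\<dots> = (\<Sum>K\<in>{K. K \<subseteq> ?S \<and> card K = t}. \<Sum>xs\<in>perms K. \<Sum>ys\<in>perms (?S - K).
                     q ^ lam xs * (if af t ys then 1 else 0))"
    by (rule split_sum) (use t in auto)
  also have "\<dots> = (\<Sum>K\<in>{K. K \<subseteq> ?S \<and> card K = t}. of_nat (EE (n - t)) * Al {1..t} q)"
  proof (rule sum.cong)
    fix K assume K: "K \<in> {K. K \<subseteq> ?S \<and> card K = t}"
    then have fK: "finite K" using finite_subset by auto
    have cd: "card (?S - K) = n - t" using K by (simp add: card_Diff_subset fK)
    have "(\<Sum>xs\<in>perms K. \<Sum>ys\<in>perms (?S - K). q ^ lam xs * (if af t ys then 1 else 0))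
        = (\<Sum>xs\<in>perms K. q ^ lam xs) * (\<Sum>ys\<in>perms (?S - K). (if af t ys then 1 else 0))"
      by (simp add: sum_product)
    also have "(\<Sum>ys\<in>perms (?S - K). (if af t ys then 1 else 0)) = (of_nat (Ec t (?S - K)) :: 'a)"
      unfolding Ec_def of_nat_sum by (rule sum.cong) auto
    also have "Ec t (?S - K) = EE (n - t)" using Ec_EE[of "?S - K" t] cd by simp
    also have "(\<Sum>xs\<in>perms K. q ^ lam xs) = Al {1..t} q"
      using Al_iso[OF fK, of q] K by (simp add: Al_def)
    finally show "(\<Sum>xs\<in>perms K. \<Sum>ys\<in>perms (?S - K). q ^ lam xs * (if af t ys then 1 else 0))
        = of_nat (EE (n - t)) * Al {1..t} q" by (simp add: mult.commute)
  qed simp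
  also have "\<dots> = of_nat (n choose t) * of_nat (EE (n - t)) * Al {1..t} q"
    by (simp add: n_subsets)
  finally show ?thesis .
qed

lemma R1:
  fixes q :: "'a::comm_ring_1"
  assumes n: "1 \<le> n"
  shows "Al {1..n} q = (\<Sum>t<n. of_nat (n choose t) * of_nat (EE (n - t)) * Al {1..t} q * q^t *
                                  (\<Prod>i\<in>{t<..<n}. 1 - q^i))"
proof -
  have "Al {1..n} q = (\<Sum>ws\<in>perms {1..n}. \<Sum>t<n. (if gaf t ws then 1 else 0) *
        (\<Prod>i\<in>{t<..<n}. 1 - q^i) * q^t * q ^ lam (take t ws))"
    unfolding Al_def
  proof (rule sum.cong)
    fix ws assume "ws \<in> perms {1..n}"
    then have "length ws = n" using length_finite_permutations_of_set by fastforce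
    then show "q ^ lam ws = (\<Sum>t<n. (if gaf t ws then 1 else 0) *
        (\<Prod>i\<in>{t<..<n}. 1 - q^i) * q^t * q ^ lam (take t ws))"
      using key_pointwise[of ws q] n by (cases ws) auto
  qed simp
  also have "\<dots> = (\<Sum>t<n. (\<Prod>i\<in>{t<..<n}. 1 - q^i) * q^t *
        (\<Sum>ws\<in>perms {1..n}. (if gaf t ws then 1 else 0) * q ^ lam (take t ws)))"
    by (subst sum.swap) (simp add: sum_distrib_left mult_ac)
  also have "\<dots> = (\<Sum>t<n. of_nat (n choose t) * of_nat (EE (n - t)) * Al {1..t} q * q^t *
                                  (\<Prod>i\<in>{t<..<n}. 1 - q^i))"
  proof (rule sum.cong)
    fix t assume "t \<in> {..<n}"
    then have "t \<le> n" by simp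
    note e = inner_split[OF this, of q]
    show "(\<Prod>i\<in>{t<..<n}. 1 - q^i) * q^t *
        (\<Sum>ws\<in>perms {1..n}. (if gaf t ws then 1 else 0) * q ^ lam (take t ws)) =
        of_nat (n choose t) * of_nat (EE (n - t)) * Al {1..t} q * q^t * (\<Prod>i\<in>{t<..<n}. 1 - q^i)"
      unfolding e by (simp add: mult_ac)
  qed simp
  finally show ?thesis .
qed


lemma adesc_append_left: "0 < i \<Longrightarrow> i < length xs \<Longrightarrow> adesc d (xs @ ys) i = adesc d xs i"
  by (auto simp: adesc_def nth_append)

lemma adesc_append_right: "length xs < i \<Longrightarrow> i < length xs + length ys \<Longrightarrow>
    adesc d (xs @ ys) i = adesc (d + length xs) ys (i - length xs)"
proof -
  assume a: "length xs < i" "i < length xs + length ys"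
  have e1: "(xs @ ys) ! (i - 1) = ys ! (i - length xs - 1)" using a by (auto simp: nth_append)
  have e2: "(xs @ ys) ! i = ys ! (i - length xs)" using a by (simp add: nth_append)
  have p: "even (d + i) = even (d + length xs + (i - length xs))" using a by simp
  show ?thesis unfolding adesc_def e1 e2 p by simp
qed

lemma af_append:
  "af d (xs @ ys) \<longleftrightarrow> af d xs \<and> af (d + length xs) ys \<and>
     (xs \<noteq> [] \<and> ys \<noteq> [] \<longrightarrow> \<not> adesc d (xs @ ys) (length xs))"
proof (rule iffI)
  assume h: "af d (xs @ ys)"
  have g1: "af d xs" unfolding af_def
  proof (intro allI impI)
    fix i assume "0 < i \<and> i < length xs"
    then show "\<not> adesc d xs i" using h adesc_append_left[of i xs d ys] by (auto simp: af_def)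
  qed
  have g2: "af (d + length xs) ys" unfolding af_def
  proof (intro allI impI)
    fix i assume i: "0 < i \<and> i < length ys"
    then have "\<not> adesc d (xs @ ys) (length xs + i)" using h by (auto simp: af_def)
    then show "\<not> adesc (d + length xs) ys i" using adesc_append_right[of xs "length xs + i" ys d] i by simp
  qed
  have g3: "xs \<noteq> [] \<and> ys \<noteq> [] \<longrightarrow> \<not> adesc d (xs @ ys) (length xs)"
    using h by (auto simp: af_def)
  show "af d xs \<and> af (d + length xs) ys \<and>
     (xs \<noteq> [] \<and> ys \<noteq> [] \<longrightarrow> \<not> adesc d (xs @ ys) (length xs))" using g1 g2 g3 by blast
next
  assume "af d xs \<and> af (d + length xs) ys \<and>
     (xs \<noteq> [] \<and> ys \<noteq> [] \<longrightarrow> \<not> adesc d (xs @ ys) (length xs))"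
  then have h1: "af d xs" and h2: "af (d + length xs) ys"
    and h3: "xs \<noteq> [] \<and> ys \<noteq> [] \<longrightarrow> \<not> adesc d (xs @ ys) (length xs)" by auto
  show "af d (xs @ ys)" unfolding af_def
  proof (intro allI impI)
    fix i assume i: "0 < i \<and> i < length (xs @ ys)"
    consider "i < length xs" | "i = length xs" | "length xs < i" by linarith
    then show "\<not> adesc d (xs @ ys) i"
    proof cases
      case 1 then show ?thesis using h1 i adesc_append_left[of i xs d ys] by (auto simp: af_def)
    next
      case 2 then show ?thesis using h3 i by auto
    next
      case 3
      then have "\<not> adesc (d + length xs) ys (i - length xs)" using h2 i by (auto simp: af_def)
      then show ?thesis using adesc_append_right[of xs i ys d] 3 i by simp
    qed
  qed
qed

lemma af_Cons_max:
  assumes "\<forall>z\<in>set zs. z < m"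
  shows "af d (m # zs) \<longleftrightarrow> af (Suc d) zs \<and> (zs \<noteq> [] \<longrightarrow> odd d)"
proof -
  have "af d ([m] @ zs) \<longleftrightarrow> af d [m] \<and> af (d + 1) zs \<and> (zs \<noteq> [] \<longrightarrow> \<not> adesc d ([m] @ zs) 1)"
    using af_append[of d "[m]" zs] by simp
  moreover have "af d [m]" by (simp add: af_def)
  moreover have "zs \<noteq> [] \<Longrightarrow> adesc d ([m] @ zs) 1 \<longleftrightarrow> even d"
    using assms by (cases zs) (auto simp: adesc_def)
  ultimately show ?thesis by auto
qed

lemma af_split_max:
  assumes "length xs = k" "\<forall>x\<in>set xs. x < m" "\<forall>z\<in>set zs. z < m"
  shows "af 1 (xs @ m # zs) \<longleftrightarrow> even k \<and> af 1 xs \<and> af k zs"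
proof -
  have A: "af 1 (xs @ (m # zs)) \<longleftrightarrow> af 1 xs \<and> af (1 + k) (m # zs) \<and>
     (xs \<noteq> [] \<longrightarrow> \<not> adesc 1 (xs @ m # zs) k)"
    using af_append[of 1 xs "m # zs"] assms(1) by simp
  have B: "af (1 + k) (m # zs) \<longleftrightarrow> af k zs \<and> (zs \<noteq> [] \<longrightarrow> even k)"
    using af_Cons_max[OF assms(3), of "1 + k"] af_plus2[of k zs] by simp
  have C: "xs \<noteq> [] \<Longrightarrow> adesc 1 (xs @ m # zs) k \<longleftrightarrow> odd k"
  proof -
    assume ne: "xs \<noteq> []"
    then have k0: "0 < k" using assms(1) by auto
    have "(xs @ m # zs) ! (k - 1) = xs ! (k - 1)" using assms(1) k0 by (simp add: nth_append)
    moreover have "xs ! (k - 1) \<in> set xs" using assms(1) k0 by simp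
    moreover have "(xs @ m # zs) ! k = m" using assms(1) nth_append_length by metis
    ultimately show ?thesis using assms(2) by (auto simp: adesc_def)
  qed
  show ?thesis
  proof (cases "xs = []")
    case True
    then have "k = 0" using assms(1) by simp
    then show ?thesis using A B True by auto
  next
    case False
    then show ?thesis using A B C by auto
  qed
qed

lemma hd_perm_sum:
  fixes P :: "nat list \<Rightarrow> 'a::comm_monoid_add"
  assumes "finite A" "m \<in> A"
  shows "(\<Sum>ys\<in>perms A. if ys \<noteq> [] \<and> hd ys = m then P (tl ys) else 0) = (\<Sum>zs\<in>perms (A - {m}). P zs)"
proof -
  have "(\<Sum>ys\<in>perms A. if ys \<noteq> [] \<and> hd ys = m then P (tl ys) else 0)
      = (\<Sum>ys\<in>{ys\<in>perms A. ys \<noteq> [] \<and> hd ys = m}. P (tl ys))"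
    by (simp add: sum.inter_filter)
  also have "{ys\<in>perms A. ys \<noteq> [] \<and> hd ys = m} = (\<lambda>zs. m # zs) ` perms (A - {m})"
  proof (rule set_eqI, rule iffI)
    fix ys assume "ys \<in> {ys\<in>perms A. ys \<noteq> [] \<and> hd ys = m}"
    then obtain zs where ys: "ys = m # zs" "distinct (m # zs)" "set (m # zs) = A"
      by (cases ys) (auto simp: permutations_of_set_def)
    then have "zs \<in> perms (A - {m})" by (auto simp: permutations_of_set_def)
    then show "ys \<in> (\<lambda>zs. m # zs) ` perms (A - {m})" using ys by blast
  next
    fix ys assume "ys \<in> (\<lambda>zs. m # zs) ` perms (A - {m})"
    then obtain zs where "ys = m # zs" "zs \<in> perms (A - {m})" by blast
    then show "ys \<in> {ys\<in>perms A. ys \<noteq> [] \<and> hd ys = m}"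
      using assms by (auto simp: permutations_of_set_def)
  qed
  also have "(\<Sum>ys\<in>(\<lambda>zs. m # zs) ` perms (A - {m}). P (tl ys)) = (\<Sum>zs\<in>perms (A - {m}). P zs)"
    by (subst sum.reindex) (auto simp: inj_on_def)
  finally show ?thesis .
qed

lemma count_max_pos:
  assumes "distinct ws" "m \<in> set ws"
  shows "(\<Sum>k<length ws. if ws ! k = m then 1 else 0) = (1::nat)"
proof -
  obtain j where j: "j < length ws" "ws ! j = m" using assms(2) by (auto simp: in_set_conv_nth)
  have st: "{k\<in>{..<length ws}. ws ! k = m} = {j}"
  proof (rule set_eqI, rule iffI)
    fix x assume "x \<in> {k\<in>{..<length ws}. ws ! k = m}"
    then have "x < length ws" "ws ! x = ws ! j" using j by auto
    then show "x \<in> {j}" using nth_eq_iff_index_eq[OF assms(1) _ j(1)] by simp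
  next
    fix x assume "x \<in> {j}" then show "x \<in> {k\<in>{..<length ws}. ws ! k = m}" using j by simp
  qed
  have "(\<Sum>k<length ws. if ws ! k = m then 1 else 0) = (\<Sum>k\<in>{k\<in>{..<length ws}. ws ! k = m}. (1::nat))"
    by (rule sum.inter_filter[symmetric]) simp
  also have "\<dots> = 1" unfolding st by simp
  finally show ?thesis .
qed

lemma EE_0: "EE 0 = 1"
  by (simp add: EE_def Ec_def af_def)

lemma EE_rec: "EE (Suc n) = (\<Sum>k\<le>n. if even k then (n choose k) * EE k * EE (n - k) else 0)"
proof -
  let ?S = "{1..Suc n}" and ?m = "Suc n"
  define G where "G k xs ys = (if ys \<noteq> [] \<and> hd ys = ?m then (if af 1 (xs @ ?m # tl ys) then 1 else 0) else (0::nat))"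
    for k :: nat and xs ys :: "nat list"
  have "EE (Suc n) = (\<Sum>ws\<in>perms ?S. if af 1 ws then 1 else 0)" by (simp add: EE_def Ec_def)
  also have "\<dots> = (\<Sum>ws\<in>perms ?S. \<Sum>k\<le>n. G k (take k ws) (drop k ws))"
  proof (rule sum.cong)
    fix ws assume ws: "ws \<in> perms ?S"
    have len: "length ws = Suc n" using length_finite_permutations_of_set[OF ws] by simp
    have d: "distinct ws" "?m \<in> set ws" using ws by (auto simp: permutations_of_set_def)
    have "(\<Sum>k\<le>n. G k (take k ws) (drop k ws)) = (\<Sum>k<length ws. (if ws ! k = ?m then 1 else 0) * (if af 1 ws then 1 else 0))"
    proof -
      have "{..n} = {..<length ws}" using len by auto
      moreover have "\<And>k. k < length ws \<Longrightarrow> G k (take k ws) (drop k ws) = (if ws ! k = ?m then 1 else 0) * (if af 1 ws then 1 else 0)"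
      proof -
        fix k assume k: "k < length ws"
        have "drop k ws \<noteq> []" "hd (drop k ws) = ws ! k" using k by (auto simp: hd_drop_conv_nth)
        moreover have "ws ! k = ?m \<Longrightarrow> take k ws @ ?m # tl (drop k ws) = ws"
        proof -
          assume wk: "ws ! k = ?m"
          have "drop k ws = hd (drop k ws) # tl (drop k ws)" using \<open>drop k ws \<noteq> []\<close> by simp
          then have "drop k ws = ?m # tl (drop k ws)" using \<open>hd (drop k ws) = ws ! k\<close> wk by simp
          then show ?thesis by (metis append_take_drop_id)
        qed
        ultimately show "G k (take k ws) (drop k ws) = (if ws ! k = ?m then 1 else 0) * (if af 1 ws then 1 else 0)"
          unfolding G_def by auto
      qed
      ultimately show ?thesis by simp
    qed
    also have "\<dots> = (\<Sum>k<length ws. if ws ! k = ?m then 1 else 0) * (if af 1 ws then 1 else 0)"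
      by (simp add: sum_distrib_right)
    also have "\<dots> = (if af 1 ws then 1 else 0)" using count_max_pos[OF d] by simp
    finally show "(if af 1 ws then 1 else 0) = (\<Sum>k\<le>n. G k (take k ws) (drop k ws))" by simp
  qed simp
  also have "\<dots> = (\<Sum>k\<le>n. \<Sum>ws\<in>perms ?S. G k (take k ws) (drop k ws))"
    by (rule sum.swap)
  also have "\<dots> = (\<Sum>k\<le>n. if even k then (n choose k) * EE k * EE (n - k) else 0)"
  proof (rule sum.cong)
    fix k assume k: "k \<in> {..n}"
    have "(\<Sum>ws\<in>perms ?S. G k (take k ws) (drop k ws)) =
          (\<Sum>K\<in>{K. K \<subseteq> ?S \<and> card K = k}. \<Sum>xs\<in>perms K. \<Sum>ys\<in>perms (?S - K). G k xs ys)"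
      by (rule split_sum) (use k in auto)
    also have "\<dots> = (\<Sum>K\<in>{K. K \<subseteq> {1..n} \<and> card K = k}. \<Sum>xs\<in>perms K. \<Sum>ys\<in>perms (?S - K). G k xs ys)"
    proof (rule sum.mono_neutral_right)
      show "finite {K. K \<subseteq> ?S \<and> card K = k}"
      proof -
        have "{K. K \<subseteq> ?S \<and> card K = k} \<subseteq> Pow ?S" by auto
        then show ?thesis by (simp add: finite_subset)
      qed
      show "{K. K \<subseteq> {1..n} \<and> card K = k} \<subseteq> {K. K \<subseteq> ?S \<and> card K = k}" by auto
      show "\<forall>K\<in>{K. K \<subseteq> ?S \<and> card K = k} - {K. K \<subseteq> {1..n} \<and> card K = k}.
              (\<Sum>xs\<in>perms K. \<Sum>ys\<in>perms (?S - K). G k xs ys) = 0"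
      proof
        fix K assume K: "K \<in> {K. K \<subseteq> ?S \<and> card K = k} - {K. K \<subseteq> {1..n} \<and> card K = k}"
        then have K1: "K \<subseteq> ?S" "\<not> K \<subseteq> {1..n}" by auto
        then obtain x where x: "x \<in> K" "x \<notin> {1..n}" by blast
        then have "x = ?m" using K1(1) by auto
        then have mK: "?m \<in> K" using x by simp
        have "\<And>ys. ys \<in> perms (?S - K) \<Longrightarrow> G k xs ys = 0" for xs
        proof -
          fix ys assume "ys \<in> perms (?S - K)"
          then have "set ys = ?S - K" by (rule permutations_of_setD)
          then have "ys \<noteq> [] \<Longrightarrow> hd ys \<noteq> ?m"
          proof -
            assume st: "set ys = ?S - K" and ne: "ys \<noteq> []"
            have "hd ys \<in> set ys" using ne by simp
            then have "hd ys \<notin> K" using st by simp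
            then show "hd ys \<noteq> ?m" using mK by metis
          qed
          then show "G k xs ys = 0" by (auto simp: G_def)
        qed
        then show "(\<Sum>xs\<in>perms K. \<Sum>ys\<in>perms (?S - K). G k xs ys) = 0" by simp
      qed
    qed
    also have "\<dots> = (\<Sum>K\<in>{K. K \<subseteq> {1..n} \<and> card K = k}. if even k then EE k * EE (n - k) else 0)"
    proof (rule sum.cong)
      fix K assume K: "K \<in> {K. K \<subseteq> {1..n} \<and> card K = k}"
      have fK: "finite K" using K by (intro finite_subset[of K "{1..n}"]) auto
      have SK: "?S - K - {?m} = {1..n} - K" by auto
      have mSK: "?m \<in> ?S - K" using K by auto
      have cd: "card ({1..n} - K) = n - k" using K by (simp add: card_Diff_subset fK)
      have "(\<Sum>xs\<in>perms K. \<Sum>ys\<in>perms (?S - K). G k xs ys)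
          = (\<Sum>xs\<in>perms K. \<Sum>zs\<in>perms ({1..n} - K). if af 1 (xs @ ?m # zs) then 1 else 0)"
        unfolding G_def
      proof (rule sum.cong[OF refl])
        fix xs
        show "(\<Sum>ys\<in>perms (?S - K). if ys \<noteq> [] \<and> hd ys = ?m then (if af 1 (xs @ ?m # tl ys) then 1 else 0) else 0)
            = (\<Sum>zs\<in>perms ({1..n} - K). if af 1 (xs @ ?m # zs) then 1 else (0::nat))"
          using hd_perm_sum[OF _ mSK, of "\<lambda>zs. if af 1 (xs @ ?m # zs) then 1 else (0::nat)"] SK
          by simp
      qed
      also have "\<dots> = (\<Sum>xs\<in>perms K. \<Sum>zs\<in>perms ({1..n} - K).
                  (if even k then 1 else 0) * ((if af 1 xs then 1 else 0) * (if af k zs then 1 else 0)))"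
      proof (intro sum.cong refl)
        fix xs zs assume xs: "xs \<in> perms K" and zs: "zs \<in> perms ({1..n} - K)"
        have "length xs = k" using length_finite_permutations_of_set[OF xs] K by simp
        moreover have Ksub: "K \<subseteq> {1..n}" using K by simp
        moreover have "\<forall>x\<in>set xs. x < ?m"
        proof
          fix x assume "x \<in> set xs"
          then have "x \<in> K" using permutations_of_setD(1)[OF xs] by simp
          then show "x < ?m" using Ksub by (simp add: subset_iff less_Suc_eq_le)
        qed
        moreover have "\<forall>z\<in>set zs. z < ?m"
        proof
          fix x assume "x \<in> set zs"
          then have "x \<in> {1..n} - K" using permutations_of_setD(1)[OF zs] by simp
          then show "x < ?m" by simp
        qed
        ultimately show "(if af 1 (xs @ ?m # zs) then 1 else 0) =
           (if even k then 1 else 0) * ((if af 1 xs then 1 else 0) * (if af k zs then 1 else (0::nat)))"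
          using af_split_max by auto
      qed
      also have "\<dots> = (if even k then 1 else 0) * (Ec 1 K * Ec k ({1..n} - K))"
      proof -
        have "Ec 1 K * Ec k ({1..n} - K) = (\<Sum>xs\<in>perms K. \<Sum>zs\<in>perms ({1..n} - K).
               (if af 1 xs then 1 else 0) * (if af k zs then 1 else 0))"
          unfolding Ec_def by (rule sum_product)
        then show ?thesis by (simp add: sum_distrib_left)
      qed
      also have "\<dots> = (if even k then EE k * EE (n - k) else 0)"
        using Ec_EE[OF fK, of 1] Ec_EE[of "{1..n} - K" k] cd K by simp
      finally show "(\<Sum>xs\<in>perms K. \<Sum>ys\<in>perms (?S - K). G k xs ys) = (if even k then EE k * EE (n - k) else 0)" .
    qed simp
    also have "\<dots> = (if even k then (n choose k) * EE k * EE (n - k) else 0)"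
      by (simp add: n_subsets)
    finally show "(\<Sum>ws\<in>perms ?S. G k (take k ws) (drop k ws)) = (if even k then (n choose k) * EE k * EE (n - k) else 0)" .
  qed simp
  finally show ?thesis .
qed

lemma EE_pos: "EE n \<ge> 1"
proof (induction n)
  case 0 then show ?case by (simp add: EE_0)
next
  case (Suc n)
  define f where "f k = (if even k then (n choose k) * EE k * EE (n - k) else 0)" for k
  have "f 0 \<le> sum f {..n}" by (rule member_le_sum) auto
  then have "EE (Suc n) \<ge> f 0" unfolding EE_rec f_def by simp
  then show ?case using Suc EE_0 by (simp add: f_def)
qed


unbundle fps_syntax

definition qp :: "real \<Rightarrow> nat \<Rightarrow> real" where "qp q n = (\<Prod>i\<in>{1..n}. 1 - q^i)"

definition sc :: "real \<Rightarrow> real fps \<Rightarrow> real fps" where "sc q G = Abs_fps (\<lambda>n. q^n * G $ n)"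

lemma sc_nth[simp]: "sc q G $ n = q^n * G $ n" by (simp add: sc_def)

lemma sc_mult: "sc q (A * B) = sc q A * sc q B"
proof (rule fps_ext)
  fix n
  have "sc q (A * B) $ n = (\<Sum>i=0..n. q^n * (A $ i * B $ (n-i)))" by (simp add: fps_mult_nth sum_distrib_left)
  also have "\<dots> = (\<Sum>i=0..n. (q^i * A $ i) * (q^(n-i) * B $ (n-i)))"
  proof (rule sum.cong[OF refl])
    fix i assume "i \<in> {0..n}"
    then have "q^n = q^i * q^(n-i)" by (simp add: power_add[symmetric])
    then show "q^n * (A $ i * B $ (n-i)) = (q^i * A $ i) * (q^(n-i) * B $ (n-i))" by simp
  qed
  also have "\<dots> = (sc q A * sc q B) $ n" by (simp add: fps_mult_nth)
  finally show "sc q (A * B) $ n = (sc q A * sc q B) $ n" .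
qed

lemma sc_diff: "sc q (A - B) = sc q A - sc q B"
  by (rule fps_ext) (simp add: algebra_simps)

lemma sc_deriv: "fps_deriv (sc q A) = fps_const q * sc q (fps_deriv A)"
  by (rule fps_ext) simp

lemma coeff_zero_rec:
  fixes U Y :: "real fps"
  assumes q: "q > 1" and Y0: "Y $ 0 = 1" and eq: "U = fps_const q * Y * sc q U"
  shows "U = 0"
proof -
  have "U $ n = 0" for n
  proof (induction n rule: less_induct)
    case (less n)
    have "U $ n = (fps_const q * (Y * sc q U)) $ n" by (subst eq) (simp only: mult.assoc)
    also have "\<dots> = q * (Y * sc q U) $ n" by (rule fps_mult_left_const_nth)
    also have "\<dots> = q * (\<Sum>i=0..n. Y $ i * (q^(n-i) * U $ (n-i)))" by (simp add: fps_mult_nth)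
    also have "(\<Sum>i=0..n. Y $ i * (q^(n-i) * U $ (n-i))) = Y $ 0 * (q^n * U $ n) + (\<Sum>i=1..n. Y $ i * (q^(n-i) * U $ (n-i)))"
      by (simp add: sum.atLeast_Suc_atMost)
    also have "(\<Sum>i=1..n. Y $ i * (q^(n-i) * U $ (n-i))) = 0"
      using less by (intro sum.neutral) auto
    finally have "U $ n = q^(Suc n) * U $ n" using Y0 by simp
    then have "(1 - q^(Suc n)) * U $ n = 0" by (simp add: algebra_simps)
    moreover have "q^(Suc n) \<noteq> 1" using q by (metis less_numeral_extra(4) one_less_power zero_less_Suc)
    ultimately show ?case by simp
  qed
  then show ?thesis by (intro fps_ext) simp
qed

lemma main_U:
  fixes q :: real and f e s h :: "nat \<Rightarrow> real"
  assumes q: "q > 1" and e0: "e 0 = 1"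
    and F1: "\<And>n. f n = (\<Sum>i=0..n. e i * (q^(n-i) * f (n-i)))"
    and Y1: "\<And>n. of_nat (n+1) * e (n+1) = (\<Sum>j=0..n. s j * e (n-j))"
    and H1: "\<And>j. h j = s j + q * (q^j * h j)"
  shows "of_nat (n+1) * f (n+1) = (\<Sum>j=0..n. h j * f (n-j))"
proof -
  define F where "F = Abs_fps f"
  define Y where "Y = Abs_fps e"
  define S where "S = Abs_fps s"
  define H where "H = Abs_fps h"
  have FY: "F = Y * sc q F"
    by (rule fps_ext) (simp add: F_def Y_def fps_mult_nth F1[symmetric])
  have dY: "fps_deriv Y = S * Y"
  proof (rule fps_ext)
    fix n
    show "fps_deriv Y $ n = (S * Y) $ n"
      using Y1[of n] by (simp add: S_def Y_def fps_mult_nth)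
  qed
  have HS: "H = S + fps_const q * sc q H"
    by (rule fps_ext) (simp add: H_def S_def H1[symmetric])
  define U where "U = fps_deriv F - H * F"
  have dF: "fps_deriv F = S * F + fps_const q * Y * sc q (fps_deriv F)"
  proof -
    have "fps_deriv F = fps_deriv (Y * sc q F)" using FY by simp
    also have "\<dots> = fps_deriv Y * sc q F + Y * fps_deriv (sc q F)" by simp
    also have "\<dots> = S * (Y * sc q F) + fps_const q * Y * sc q (fps_deriv F)"
      by (simp add: dY sc_deriv algebra_simps)
    finally show ?thesis using FY by simp
  qed
  have HF: "H * F = S * F + fps_const q * Y * sc q (H * F)"
  proof -
    have "H * F = S * F + fps_const q * sc q H * (Y * sc q F)"
      by (subst HS) (simp add: algebra_simps FY[symmetric])
    also have "\<dots> = S * F + fps_const q * Y * sc q (H * F)"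
      by (simp add: sc_mult algebra_simps)
    finally show ?thesis .
  qed
  have "U = fps_const q * Y * sc q U"
  proof -
    have "U = (S * F + fps_const q * Y * sc q (fps_deriv F)) - (S * F + fps_const q * Y * sc q (H * F))"
      unfolding U_def using dF HF by simp
    also have "\<dots> = fps_const q * Y * (sc q (fps_deriv F) - sc q (H * F))" by (simp add: algebra_simps)
    also have "\<dots> = fps_const q * Y * sc q U" by (simp add: U_def sc_diff)
    finally show ?thesis .
  qed
  moreover have "Y $ 0 = 1" by (simp add: Y_def e0)
  ultimately have "U = 0" using coeff_zero_rec[OF q] by blast
  then have "U $ n = 0" by simp
  then show ?thesis by (simp add: U_def F_def H_def fps_mult_nth)
qed


lemma qp_pos_ne: "q > 1 \<Longrightarrow> 0 < i \<Longrightarrow> 1 - (q::real)^i \<noteq> 0"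
  by (metis eq_iff_diff_eq_0 less_numeral_extra(4) one_less_power)

lemma qp_ne: "q > 1 \<Longrightarrow> qp q n \<noteq> 0"
  unfolding qp_def using qp_pos_ne by (auto simp: prod_zero_iff)

lemma qp_Suc: "qp q (Suc n) = qp q n * (1 - q^Suc n)"
  by (simp add: qp_def)

lemma qp_split: "t \<le> m \<Longrightarrow> qp q m = qp q t * (\<Prod>i\<in>{t<..m}. 1 - q^i)"
proof -
  assume "t \<le> m"
  then have "{1..m} = {1..t} \<union> {t<..m}" by auto
  moreover have "{1..t} \<inter> {t<..m} = {}" by auto
  ultimately show ?thesis unfolding qp_def by (simp add: prod.union_disjoint)
qed

lemma Al_0: "Al {1..0} q = 1"
  by (simp add: Al_def)

lemma sum_shift_rev:
  fixes g :: "nat \<Rightarrow> 'a::comm_monoid_add"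
  shows "(\<Sum>i=0..n. g i) = g 0 + (\<Sum>t<n. g (n - t))"
proof -
  have "(\<Sum>i=0..n. g i) = g 0 + (\<Sum>i=Suc 0..n. g i)" by (simp add: sum.atLeast_Suc_atMost)
  also have "(\<Sum>i=Suc 0..n. g i) = (\<Sum>t<n. g (n - t))"
    by (rule sum.reindex_bij_witness[of _ "\<lambda>i. n - i" "\<lambda>t. n - t"]) auto
  finally show ?thesis .
qed

context
  fixes q :: real
  assumes q: "q > 1"
begin

definition "ff n = Al {1..n} q / (fact n * qp q n)"
definition "ee n = real (EE n) / fact n"
definition "ss j = (if even j then ee j else 0)"
definition "hh j = ss j / (1 - q^(j+1))"

lemma F1_aux: "1 \<le> n \<Longrightarrow> (1 - q^n) * ff n = (\<Sum>t<n. ee (n - t) * (q^t * ff t))"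
proof -
  assume n: "1 \<le> n"
  obtain m where m: "n = Suc m" using n by (cases n) auto
  have e: "qp q n = qp q m * (1 - q^n)" using m qp_Suc by simp
  have c: "1 - q^n \<noteq> 0" using qp_pos_ne[OF q, of n] n by simp
  have "(1 - q^n) * ff n = (1 - q^n) * (Al {1..n} q / (fact n * (qp q m * (1 - q^n))))"
    unfolding ff_def e by simp
  also have "\<dots> = Al {1..n} q / (fact n * qp q m)"
    using c qp_ne[OF q, of m] by (simp add: field_simps)
  also have "\<dots> = (\<Sum>t<n. of_nat (n choose t) * of_nat (EE (n - t)) * Al {1..t} q * q^t *
                                  (\<Prod>i\<in>{t<..<n}. 1 - q^i)) / (fact n * qp q m)"
    using R1[OF n, of q] by simp
  also have "\<dots> = (\<Sum>t<n. ee (n - t) * (q^t * ff t))"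
    unfolding sum_divide_distrib
  proof (rule sum.cong[OF refl])
    fix t assume t: "t \<in> {..<n}"
    then have tm: "t \<le> m" using m by simp
    have P: "qp q m = qp q t * (\<Prod>i\<in>{t<..<n}. 1 - q^i)"
      using qp_split[OF tm, of q] m by (simp add: greaterThanAtMost_def greaterThanLessThan_def lessThan_Suc_atMost)
    have nz1: "qp q t \<noteq> 0" by (rule qp_ne[OF q])
    have nz2: "(\<Prod>i\<in>{t<..<n}. 1 - q^i) \<noteq> 0" using qp_ne[OF q, of m] P by auto
    have bin: "real (n choose t) = fact n / (fact t * fact (n - t))"
      using t by (simp add: binomial_fact)
    show "of_nat (n choose t) * of_nat (EE (n - t)) * Al {1..t} q * q^t *
           (\<Prod>i\<in>{t<..<n}. 1 - q^i) / (fact n * qp q m) = ee (n - t) * (q^t * ff t)"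
      unfolding ee_def ff_def P bin using nz1 nz2 by (simp add: field_simps)
  qed
  finally show ?thesis .
qed

lemma F1: "ff n = (\<Sum>i=0..n. ee i * (q^(n-i) * ff (n-i)))"
proof (cases "n = 0")
  case True
  then show ?thesis by (simp add: ff_def ee_def EE_0 Al_0 qp_def)
next
  case False
  have "(\<Sum>i=0..n. ee i * (q^(n-i) * ff (n-i))) = ee 0 * (q^n * ff n) + (\<Sum>t<n. ee (n - t) * (q^(n - (n - t)) * ff (n - (n - t))))"
    using sum_shift_rev[of "\<lambda>i. ee i * (q^(n-i) * ff (n-i))" n] by simp
  also have "(\<Sum>t<n. ee (n - t) * (q^(n - (n - t)) * ff (n - (n - t)))) = (\<Sum>t<n. ee (n - t) * (q^t * ff t))"
    by (rule sum.cong) auto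
  also have "\<dots> = (1 - q^n) * ff n" using F1_aux False by simp
  finally show ?thesis by (simp add: ee_def EE_0 algebra_simps)
qed

lemma Y1: "of_nat (n+1) * ee (n+1) = (\<Sum>j=0..n. ss j * ee (n-j))"
proof -
  have "of_nat (n+1) * ee (n+1) = of_nat (n+1) * (real (EE (Suc n)) / (of_nat (n+1) * fact n))"
    unfolding ee_def by (simp add: fact_Suc)
  also have "\<dots> = real (EE (Suc n)) / fact n" by simp
  also have "\<dots> = (\<Sum>k\<le>n. if even k then real (n choose k) * EE k * EE (n - k) else 0) / fact n"
    unfolding EE_rec of_nat_sum by (intro arg_cong[where f="\<lambda>x. x / fact n"] sum.cong) auto
  also have "\<dots> = (\<Sum>j=0..n. ss j * ee (n-j))"
    unfolding sum_divide_distrib atMost_atLeast0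
  proof (rule sum.cong[OF refl])
    fix k assume k: "k \<in> {0..n}"
    have bin: "real (n choose k) = fact n / (fact k * fact (n - k))"
      using k by (simp add: binomial_fact)
    show "(if even k then real (n choose k) * EE k * EE (n - k) else 0) / fact n = ss k * ee (n - k)"
      unfolding ss_def ee_def bin by (simp add: field_simps)
  qed
  finally show ?thesis .
qed

lemma H1: "hh j = ss j + q * (q^j * hh j)"
proof -
  have nz: "1 - q^(j+1) \<noteq> 0" using qp_pos_ne[OF q, of "j+1"] by simp
  show ?thesis unfolding hh_def using nz by (simp add: field_simps)
qed

lemma main_h: "of_nat (n+1) * ff (n+1) = (\<Sum>j=0..n. hh j * ff (n-j))"
  by (rule main_U[OF q _ F1 Y1 H1]) (simp add: ee_def EE_0)

lemma cleared:
  "Al {1..n+1} q * (\<Prod>j\<in>{j. j \<le> n \<and> even j}. 1 - q^(j+1)) =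
   (\<Sum>j\<in>{j. j \<le> n \<and> even j}. real (n choose j) * real (EE j) * Al {1..n-j} q *
        (\<Prod>i\<in>{n-j<..n+1}. 1 - q^i) * (\<Prod>j'\<in>{j. j \<le> n \<and> even j} - {j}. 1 - q^(j'+1)))"
proof -
  let ?E = "{j. j \<le> n \<and> even j}"
  let ?M = "(\<Prod>j\<in>?E. 1 - q^(j+1))"
  have finE: "finite ?E" by simp
  have l: "of_nat (n+1) * ff (n+1) = Al {1..n+1} q / (fact n * qp q (n+1))"
    unfolding ff_def by (simp add: fact_Suc field_simps del: of_nat_Suc)
  have r: "(\<Sum>j=0..n. hh j * ff (n-j)) = (\<Sum>j\<in>?E. ee j / (1 - q^(j+1)) * ff (n-j))"
  proof (rule sum.mono_neutral_cong_right)
    show "finite {0..n}" by simp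
    show "?E \<subseteq> {0..n}" by auto
    show "\<forall>i\<in>{0..n} - ?E. hh i * ff (n - i) = 0" by (auto simp: hh_def ss_def)
    show "\<And>x. x \<in> ?E \<Longrightarrow> hh x * ff (n - x) = ee x / (1 - q ^ (x + 1)) * ff (n - x)"
      by (auto simp: hh_def ss_def)
  qed
  have qn: "qp q (n+1) \<noteq> 0" by (rule qp_ne[OF q])
  have "Al {1..n+1} q = fact n * qp q (n+1) * (\<Sum>j\<in>?E. ee j / (1 - q^(j+1)) * ff (n-j))"
    using main_h[of n] l r qn by (simp add: field_simps)
  then have "Al {1..n+1} q * ?M = (\<Sum>j\<in>?E. fact n * qp q (n+1) * ?M * (ee j / (1 - q^(j+1)) * ff (n-j)))"
    by (simp add: sum_distrib_left sum_distrib_right mult_ac)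
  also have "\<dots> = (\<Sum>j\<in>?E. real (n choose j) * real (EE j) * Al {1..n-j} q *
        (\<Prod>i\<in>{n-j<..n+1}. 1 - q^i) * (\<Prod>j'\<in>?E - {j}. 1 - q^(j'+1)))"
  proof (rule sum.cong[OF refl])
    fix j assume j: "j \<in> ?E"
    have jn: "n - j \<le> n + 1" by simp
    have P: "qp q (n+1) = qp q (n-j) * (\<Prod>i\<in>{n-j<..n+1}. 1 - q^i)" by (rule qp_split[OF jn])
    have Mj: "?M = (1 - q^(j+1)) * (\<Prod>j'\<in>?E - {j}. 1 - q^(j'+1))"
      using j finE by (simp add: prod.remove)
    have nz1: "qp q (n-j) \<noteq> 0" by (rule qp_ne[OF q])
    have nz2: "1 - q^(j+1) \<noteq> 0" using qp_pos_ne[OF q, of "j+1"] by simp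
    have bin: "real (n choose j) = fact n / (fact j * fact (n - j))"
      using j by (simp add: binomial_fact)
    show "fact n * qp q (n+1) * ?M * (ee j / (1 - q^(j+1)) * ff (n-j)) = real (n choose j) * real (EE j) * Al {1..n-j} q *
        (\<Prod>i\<in>{n-j<..n+1}. 1 - q^i) * (\<Prod>j'\<in>?E - {j}. 1 - q^(j'+1))"
      unfolding P Mj bin ee_def ff_def using nz1 nz2 by (simp add: field_simps)
  qed
  finally show ?thesis .
qed

end


lemma nth_upt1: "i < n \<Longrightarrow> [1..<Suc n] ! i = Suc i"
  by (simp add: nth_upt del: upt_Suc)

lemma perm_list_bij: "bij_betw (\<lambda>p. map p [1..<Suc n]) {p. p permutes {1..n}} (perms {1..n})"
proof (rule bij_betw_imageI)
  show "inj_on (\<lambda>p. map p [1..<Suc n]) {p. p permutes {1..n}}"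
  proof (rule inj_onI)
    fix p p' assume p: "p \<in> {p. p permutes {1..n}}" and p': "p' \<in> {p. p permutes {1..n}}"
      and eq: "map p [1..<Suc n] = map p' [1..<Suc n]"
    show "p = p'"
    proof (rule ext)
      fix x
      show "p x = p' x"
      proof (cases "x \<in> {1..n}")
        case True
        then have "x \<in> set [1..<Suc n]" by auto
        then show ?thesis using eq by (metis map_eq_conv)
      next
        case False
        then show ?thesis using p p' by (simp add: permutes_not_in)
      qed
    qed
  qed
  show "(\<lambda>p. map p [1..<Suc n]) ` {p. p permutes {1..n}} = perms {1..n}"
  proof (rule set_eqI, rule iffI)
    fix ws assume "ws \<in> (\<lambda>p. map p [1..<Suc n]) ` {p. p permutes {1..n}}"
    then obtain p where p: "p permutes {1..n}" and ws: "ws = map p [1..<Suc n]" by blast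
    have "distinct ws" unfolding ws using permutes_inj[OF p]
      by (simp add: distinct_map inj_on_subset)
    moreover have "set ws = {1..n}"
    proof -
      have "set [1..<Suc n] = {1..n}" by (simp del: upt_Suc add: atLeastLessThanSuc_atLeastAtMost)
      then show ?thesis unfolding ws using permutes_image[OF p] by simp
    qed
    ultimately show "ws \<in> perms {1..n}" by (simp add: permutations_of_set_def)
  next
    fix ws assume ws: "ws \<in> perms {1..n}"
    have len: "length ws = n" using length_finite_permutations_of_set[OF ws] by simp
    have d: "distinct ws" "set ws = {1..n}" using ws by (auto simp: permutations_of_set_def)
    define p where "p i = (if i \<in> {1..n} then ws ! (i - 1) else i)" for i
    have "bij_betw p {1..n} {1..n}"
    proof (rule bij_betw_imageI)
      show "inj_on p {1..n}"
      proof (rule inj_onI)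
        fix i j assume i: "i \<in> {1..n}" and j: "j \<in> {1..n}" and e: "p i = p j"
        then have "ws ! (i - 1) = ws ! (j - 1)" by (simp add: p_def)
        then have "i - 1 = j - 1" using nth_eq_iff_index_eq[OF d(1)] i j len by auto
        then show "i = j" using i j by auto
      qed
      show "p ` {1..n} = {1..n}"
      proof (rule set_eqI, rule iffI)
        fix y assume "y \<in> p ` {1..n}"
        then obtain i where i: "i \<in> {1..n}" "y = p i" by blast
        then have "y = ws ! (i - 1)" "i - 1 < length ws" using len by (auto simp: p_def)
        then show "y \<in> {1..n}" using d(2) nth_mem by metis
      next
        fix y assume "y \<in> {1..n}"
        then have "y \<in> set ws" using d(2) by simp
        then obtain i where i: "i < length ws" "ws ! i = y" by (auto simp: in_set_conv_nth)
        then have "p (Suc i) = y" "Suc i \<in> {1..n}" using len by (auto simp: p_def)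
        then show "y \<in> p ` {1..n}" by blast
      qed
    qed
    then have pp: "p permutes {1..n}" by (rule bij_imp_permutes) (auto simp: p_def)
    have "map p [1..<Suc n] = ws"
      by (rule nth_equalityI) (auto simp: len nth_upt1 p_def simp del: upt_Suc)
    then show "ws \<in> (\<lambda>p. map p [1..<Suc n]) ` {p. p permutes {1..n}}" using pp by blast
  qed
qed

lemma adesc_map_upt:
  assumes "0 < i" "i < n"
  shows "adesc d (map p [1..<Suc n]) i \<longleftrightarrow> (even (d+i) \<and> p i < p (i+1)) \<or> (odd (d+i) \<and> p i > p (i+1))"
proof -
  have "map p [1..<Suc n] ! (i - 1) = p ([1..<Suc n] ! (i - 1))" using assms by (simp del: upt_Suc)
  also have "[1..<Suc n] ! (i - 1) = i" using assms nth_upt1[of "i-1" n] by simp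
  moreover have "map p [1..<Suc n] ! i = p ([1..<Suc n] ! i)" using assms by (simp del: upt_Suc)
  moreover have "[1..<Suc n] ! i = i + 1" using assms nth_upt1[of i n] by simp
  ultimately show ?thesis by (simp add: adesc_def)
qed

lemma altmaj_lam: "altmaj n p = lam (map p [1..<Suc n])"
proof -
  have "alt_descent_set n p = {i. 0 < i \<and> i < length (map p [1..<Suc n]) \<and> adesc 0 (map p [1..<Suc n]) i}"
    unfolding alt_descent_set_def using adesc_map_upt[of _ n 0 p] by auto
  then show ?thesis by (simp add: altmaj_def lam_def)
qed

lemma down_up_af:
  assumes p: "p permutes {1..n}"
  shows "down_up n p \<longleftrightarrow> af 1 (map p [1..<Suc n])"
proof -
  have ne: "p i \<noteq> p (i+1)" for i using permutes_inj[OF p] by (metis inj_eq n_not_Suc_n Suc_eq_plus1)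
  have "af 1 (map p [1..<Suc n]) \<longleftrightarrow> (\<forall>i. 0 < i \<and> i < n \<longrightarrow> \<not> ((even (1+i) \<and> p i < p (i+1)) \<or> (odd (1+i) \<and> p i > p (i+1))))"
    unfolding af_def using adesc_map_upt[of _ n 1 p] by auto
  also have "\<dots> \<longleftrightarrow> down_up n p"
  proof -
    have pt: "\<not> ((even (1+i) \<and> p i < p (i+1)) \<or> (odd (1+i) \<and> p i > p (i+1))) \<longleftrightarrow>
              (odd i \<longrightarrow> p i > p (i+1)) \<and> (even i \<longrightarrow> p i < p (i+1))" for i
      using ne[of i] by (cases "even i") auto
    have rng: "(0 < i \<and> i < n) \<longleftrightarrow> i \<in> {1..n-1}" for i by auto
    show ?thesis unfolding down_up_def pt using rng by blast
  qed
  finally show ?thesis by simp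
qed

lemma sum_altmaj: "(\<Sum>p\<in>{p. p permutes {1..n}}. g (altmaj n p)) = (\<Sum>ws\<in>perms {1..n}. g (lam ws))"
  unfolding altmaj_lam by (rule sum.reindex_bij_betw[OF perm_list_bij, of "\<lambda>ws. g (lam ws)"])

lemma euler_EE: "euler_number n = EE n"
proof -
  have b: "bij_betw (\<lambda>p. map p [1..<Suc n]) {p. p permutes {1..n} \<and> down_up n p} {ws\<in>perms {1..n}. af 1 ws}"
  proof (rule bij_betw_subset[OF perm_list_bij])
    show "{p. p permutes {1..n} \<and> down_up n p} \<subseteq> {p. p permutes {1..n}}" by auto
    show "(\<lambda>p. map p [1..<Suc n]) ` {p. p permutes {1..n} \<and> down_up n p} = {ws\<in>perms {1..n}. af 1 ws}"
    proof (rule set_eqI, rule iffI)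
      fix ws assume "ws \<in> (\<lambda>p. map p [1..<Suc n]) ` {p. p permutes {1..n} \<and> down_up n p}"
      then obtain p where "p permutes {1..n}" "down_up n p" "ws = map p [1..<Suc n]" by blast
      then show "ws \<in> {ws\<in>perms {1..n}. af 1 ws}"
        using down_up_af perm_list_bij bij_betwE by blast
    next
      fix ws assume ws: "ws \<in> {ws\<in>perms {1..n}. af 1 ws}"
      then obtain p where "p permutes {1..n}" "ws = map p [1..<Suc n]"
        using perm_list_bij by (metis (no_types, lifting) bij_betw_def imageE mem_Collect_eq)
      then show "ws \<in> (\<lambda>p. map p [1..<Suc n]) ` {p. p permutes {1..n} \<and> down_up n p}"
        using ws down_up_af by blast
    qed
  qed
  have "euler_number n = card {ws\<in>perms {1..n}. af 1 ws}"
    unfolding euler_number_def using bij_betw_same_card[OF b] by simp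
  also have "\<dots> = (\<Sum>ws\<in>{ws\<in>perms {1..n}. af 1 ws}. 1)" by simp
  also have "\<dots> = Ec 1 {1..n}" unfolding Ec_def by (rule sum.inter_filter) simp
  finally show ?thesis by (simp add: EE_def)
qed


definition Ap :: "nat \<Rightarrow> int poly" where
  "Ap n = (\<Sum>p\<in>{p. p permutes {1..n}}. monom 1 (altmaj n p))"

definition NN :: "nat \<Rightarrow> nat" where "NN n = (\<Sum>i\<in>{i. 0 < i \<and> i < n}. i)"

definition Cc :: "nat \<Rightarrow> nat \<Rightarrow> int" where
  "Cc n k = (\<Sum>ws\<in>perms {1..n}. if lam ws = k then 1 else 0)"

lemma poly_Ap: "poly (Ap n) x = Al {1..n} x"
proof -
  have "poly (Ap n) x = (\<Sum>p\<in>{p. p permutes {1..n}}. x ^ altmaj n p)"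
    unfolding Ap_def poly_sum poly_monom by simp
  also have "\<dots> = Al {1..n} x" unfolding Al_def by (rule sum_altmaj)
  finally show ?thesis .
qed

lemma coeff_Ap: "coeff (Ap n) k = Cc n k"
proof -
  have "coeff (Ap n) k = (\<Sum>p\<in>{p. p permutes {1..n}}. (\<lambda>m. if m = k then 1 else (0::int)) (altmaj n p))"
    unfolding Ap_def coeff_sum coeff_monom by (rule sum.cong) auto
  also have "\<dots> = Cc n k" unfolding Cc_def by (rule sum_altmaj)
  finally show ?thesis .
qed

lemma lam_le: "ws \<in> perms {1..n} \<Longrightarrow> lam ws \<le> NN n"
proof -
  assume ws: "ws \<in> perms {1..n}"
  have len: "length ws = n" using length_finite_permutations_of_set[OF ws] by simp
  show ?thesis unfolding lam_def NN_def len
    by (rule sum_mono2) auto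
qed

lemma adesc_Suc_not:
  assumes "distinct ws" "0 < i" "i < length ws"
  shows "adesc (Suc d) ws i \<longleftrightarrow> \<not> adesc d ws i"
proof -
  have "ws ! (i - 1) \<noteq> ws ! i" using assms by (simp add: nth_eq_iff_index_eq)
  then show ?thesis by (auto simp: adesc_def)
qed

lemma lam_compl:
  assumes ws: "ws \<in> perms {1..n}"
  shows "lam (map (\<lambda>x. Suc n - x) ws) = NN n - lam ws"
proof -
  have len: "length ws = n" using length_finite_permutations_of_set[OF ws] by simp
  have d: "distinct ws" "set ws = {1..n}" using ws by (auto simp: permutations_of_set_def)
  have anti: "\<And>x y. x \<in> {1..n} \<Longrightarrow> y \<in> {1..n} \<Longrightarrow> x < y \<Longrightarrow> Suc n - y < Suc n - x" by auto
  have A: "{i. 0 < i \<and> i < length (map (\<lambda>x. Suc n - x) ws) \<and> adesc 0 (map (\<lambda>x. Suc n - x) ws) i}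
      = {i. 0 < i \<and> i < n} - {i. 0 < i \<and> i < length ws \<and> adesc 0 ws i}"
  proof -
    have "\<And>i. 0 < i \<Longrightarrow> i < n \<Longrightarrow> adesc 0 (map (\<lambda>x. Suc n - x) ws) i \<longleftrightarrow> \<not> adesc 0 ws i"
    proof -
      fix i assume i: "0 < i" "i < n"
      have "adesc 0 (map (\<lambda>x. Suc n - x) ws) i = adesc (Suc 0) ws i"
        by (rule adesc_map_anti[where A="{1..n}"]) (use anti d i len in auto)
      also have "\<dots> \<longleftrightarrow> \<not> adesc 0 ws i" using adesc_Suc_not[OF d(1)] i len by simp
      finally show "adesc 0 (map (\<lambda>x. Suc n - x) ws) i \<longleftrightarrow> \<not> adesc 0 ws i" .
    qed
    then show ?thesis using len by auto
  qed
  have fin: "finite {i. 0 < i \<and> i < n}" by simp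
  have sub: "{i. 0 < i \<and> i < length ws \<and> adesc 0 ws i} \<subseteq> {i. 0 < i \<and> i < n}" using len by auto
  show ?thesis unfolding lam_def A NN_def using sum_diff_nat[OF finite_subset[OF sub fin] sub] by simp
qed

lemma Cc_sym: "k \<le> NN n \<Longrightarrow> Cc n k = Cc n (NN n - k)"
proof -
  assume k: "k \<le> NN n"
  define r where "r x = Suc n - x" for x
  have img: "r ` {1..n} = {1..n}"
  proof (rule set_eqI, rule iffI)
    fix x assume "x \<in> r ` {1..n}" then show "x \<in> {1..n}" by (auto simp: r_def)
  next
    fix x assume x: "x \<in> {1..n}"
    then have "x = r (r x)" "r x \<in> {1..n}" by (auto simp: r_def)
    then show "x \<in> r ` {1..n}" by blast
  qed
  have inj: "inj_on r {1..n}" by (auto simp: inj_on_def r_def)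
  have "Cc n k = (\<Sum>ws\<in>perms (r ` {1..n}). if lam ws = k then 1 else 0)" using img by (simp add: Cc_def)
  also have "\<dots> = (\<Sum>ws\<in>perms {1..n}. if lam (map r ws) = k then 1 else 0)" by (rule sum_perms_image[OF inj])
  also have "\<dots> = Cc n (NN n - k)" unfolding Cc_def
  proof (rule sum.cong[OF refl])
    fix ws assume ws: "ws \<in> perms {1..n}"
    have "lam (map r ws) = NN n - lam ws" unfolding r_def by (rule lam_compl[OF ws])
    moreover have "lam ws \<le> NN n" by (rule lam_le[OF ws])
    ultimately have "(lam (map r ws) = k) = (lam ws = NN n - k)" using k by auto
    then show "(if lam (map r ws) = k then 1 else 0) = (if lam ws = NN n - k then 1 else (0::int))" by simp
  qed
  finally show ?thesis .
qed

lemma Cc_big: "k > NN n \<Longrightarrow> Cc n k = 0"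
  unfolding Cc_def
proof (intro sum.neutral ballI)
  fix ws assume "k > NN n" "ws \<in> perms {1..n}"
  then have "lam ws \<noteq> k" using lam_le[of ws n] by linarith
  then show "(if lam ws = k then 1 else 0) = (0::int)" by simp
qed

lemma lam_zero_iff: "lam ws = 0 \<longleftrightarrow> af 0 ws"
proof -
  have "lam ws = 0 \<longleftrightarrow> (\<forall>i\<in>{i. 0 < i \<and> i < length ws \<and> adesc 0 ws i}. i = 0)"
    unfolding lam_def by (rule sum_eq_0_iff) simp
  also have "\<dots> \<longleftrightarrow> af 0 ws" by (auto simp: af_def)
  finally show ?thesis .
qed

lemma Cc_0: "Cc n 0 = int (EE n)"
proof -
  have "Cc n 0 = (\<Sum>ws\<in>perms {1..n}. if af 0 ws then 1 else 0)" unfolding Cc_def by (simp add: lam_zero_iff)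
  also have "\<dots> = int (Ec 0 {1..n})" unfolding Ec_def of_nat_sum by (rule sum.cong) auto
  also have "\<dots> = int (EE n)" using Ec_EE[of "{1..n}" 0] by simp
  finally show ?thesis .
qed

lemma coeff_Ap_0: "coeff (Ap n) 0 = int (euler_number n)"
  using coeff_Ap Cc_0 euler_EE by simp

lemma degree_Ap: "degree (Ap n) = NN n"
proof (rule antisym)
  show "degree (Ap n) \<le> NN n"
    by (rule degree_le) (simp add: coeff_Ap Cc_big)
  have "coeff (Ap n) (NN n) = int (EE n)" using coeff_Ap Cc_sym[of "NN n" n] Cc_0 by simp
  then have "coeff (Ap n) (NN n) \<noteq> 0" using EE_pos[of n] by simp
  then show "NN n \<le> degree (Ap n)" by (rule le_degree)
qed

lemma reflect_Ap: "reflect_poly (Ap n) = Ap n"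
proof (rule poly_eqI)
  fix k
  show "coeff (reflect_poly (Ap n)) k = coeff (Ap n) k"
    unfolding coeff_reflect_poly degree_Ap using Cc_sym[of k n] Cc_big[of n k]
    by (auto simp: coeff_Ap)
qed


abbreviation X :: "nat \<Rightarrow> int poly" where "X i \<equiv> monom 1 i"

lemma of_int_Al: "of_int (Al K (k::int)) = (Al K (of_int k) :: real)"
  unfolding Al_def by simp

lemma poly_eq_inf:
  fixes p r :: "int poly"
  assumes "\<And>k. k \<ge> 2 \<Longrightarrow> poly p k = poly r k"
  shows "p = r"
proof (rule ccontr)
  assume "p \<noteq> r"
  then have "p - r \<noteq> 0" by simp
  then have "finite {x. poly (p - r) x = 0}" by (rule poly_roots_finite)
  moreover have "{2..} \<subseteq> {x. poly (p - r) x = 0}" using assms by auto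
  ultimately have "finite {2::int..}" using finite_subset by blast
  then show False using infinite_Ici by blast
qed

lemma poly_identity:
  "Ap (n+1) * (\<Prod>j\<in>{j. j \<le> n \<and> even j}. 1 - X (j+1)) =
   (\<Sum>j\<in>{j. j \<le> n \<and> even j}. of_nat ((n choose j) * EE j) * Ap (n-j) *
        (\<Prod>i\<in>{n-j<..n+1}. 1 - X i) * (\<Prod>j'\<in>{j. j \<le> n \<and> even j} - {j}. 1 - X (j'+1)))"
  (is "?L = ?R")
proof (rule poly_eq_inf)
  fix k :: int assume k: "k \<ge> 2"
  let ?q = "real_of_int k"
  have q: "?q > 1" using k by simp
  have e1: "real_of_int (poly (Ap m) k) = Al {1..m} ?q" for m
    by (simp add: poly_Ap of_int_Al)
  have e2: "real_of_int (poly (\<Prod>i\<in>A. 1 - X (f i)) k) = (\<Prod>i\<in>A. 1 - ?q ^ f i)" for A f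
    by (simp add: poly_prod poly_monom of_int_prod)
  have "real_of_int (poly ?L k) = real_of_int (poly (Ap (n+1)) k) * real_of_int (poly (\<Prod>j\<in>{j. j \<le> n \<and> even j}. 1 - X (j+1)) k)"
    by simp
  also have "\<dots> = Al {1..n+1} ?q * (\<Prod>j\<in>{j. j \<le> n \<and> even j}. 1 - ?q^(j+1))"
    unfolding e1 e2[of "\<lambda>j. j+1"] by simp
  also have "\<dots> = (\<Sum>j\<in>{j. j \<le> n \<and> even j}. real (n choose j) * real (EE j) * Al {1..n-j} ?q *
        (\<Prod>i\<in>{n-j<..n+1}. 1 - ?q^i) * (\<Prod>j'\<in>{j. j \<le> n \<and> even j} - {j}. 1 - ?q^(j'+1)))"
    by (rule cleared[OF q])
  also have "\<dots> = real_of_int (poly ?R k)"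
    unfolding poly_sum of_int_sum poly_mult of_int_mult
  proof (rule sum.cong[OF refl])
    fix j
    show "real (n choose j) * real (EE j) * Al {1..n-j} ?q *
        (\<Prod>i\<in>{n-j<..n+1}. 1 - ?q^i) * (\<Prod>j'\<in>{j. j \<le> n \<and> even j} - {j}. 1 - ?q^(j'+1)) =
      real_of_int (poly (of_nat ((n choose j) * EE j)) k) * real_of_int (poly (Ap (n - j)) k) *
      real_of_int (poly (\<Prod>i\<in>{n - j<..n + 1}. 1 - X i) k) *
      real_of_int (poly (\<Prod>j'\<in>{j. j \<le> n \<and> even j} - {j}. 1 - X (j' + 1)) k)"
      unfolding e1 e2[of "\<lambda>i. i"] e2[of "\<lambda>j. j+1"] by (simp add: of_nat_poly)
  qed
  finally have "real_of_int (poly ?L k) = real_of_int (poly ?R k)" .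
  then show "poly ?L k = poly ?R k" by (simp only: of_int_eq_iff)
qed


function Pr :: "nat \<Rightarrow> int poly" where
  "Pr N = (if N = 0 then 1 else (\<Prod>i\<in>{1..N div 2}. 1 + X i) * Pr (N div 2))"
  by auto
termination by (relation "measure id") auto

function Dr :: "nat \<Rightarrow> int poly" where
  "Dr N = (if N = 0 then 1 else (\<Prod>i\<in>{1..N} \<inter> {i. odd i}. 1 - X i) * Dr (N div 2))"
  by auto
termination by (relation "measure id") auto

declare Pr.simps[simp del] Dr.simps[simp del]

lemma Pr_0: "Pr 0 = 1" by (simp add: Pr.simps)
lemma Dr_0: "Dr 0 = 1" by (simp add: Dr.simps)

lemma poly_Pr_0: "poly (Pr N) 0 = 1"
proof (induction N rule: less_induct)
  case (less N)
  show ?case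
  proof (cases "N = 0")
    case True then show ?thesis by (simp add: Pr_0)
  next
    case False
    have "poly (\<Prod>i\<in>{1..N div 2}. 1 + X i) 0 = 1" by (simp add: poly_prod poly_monom zero_power prod.neutral)
    then show ?thesis using less[of "N div 2"] False by (subst Pr.simps) simp
  qed
qed

lemma poly_Dr_0: "poly (Dr N) 0 = 1"
proof (induction N rule: less_induct)
  case (less N)
  show ?case
  proof (cases "N = 0")
    case True then show ?thesis by (simp add: Dr_0)
  next
    case False
    have "poly (\<Prod>i\<in>{1..N} \<inter> {i. odd i}. 1 - X i) 0 = 1" by (simp add: poly_prod poly_monom zero_power prod.neutral)
    then show ?thesis using less[of "N div 2"] False by (subst Dr.simps) simp
  qed
qed

lemma Pr_ne: "Pr N \<noteq> 0" using poly_Pr_0[of N] by auto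
lemma Dr_ne: "Dr N \<noteq> 0" using poly_Dr_0[of N] by auto

lemma even_part:
  "(\<Prod>i\<in>{1..N} - {i. odd i}. 1 - X i) = (\<Prod>i\<in>{1..N div 2}. (1 - X i) * (1 + X i))"
proof -
  have img: "(\<lambda>i. 2 * i) ` {1..N div 2} = {1..N} - {i. odd i}"
  proof (rule set_eqI, rule iffI)
    fix x assume "x \<in> (\<lambda>i. 2 * i) ` {1..N div 2}" then show "x \<in> {1..N} - {i. odd i}" by auto
  next
    fix x assume x: "x \<in> {1..N} - {i. odd i}"
    then have "x = 2 * (x div 2)" "x div 2 \<in> {1..N div 2}" by (auto simp: div_le_mono)
    then show "x \<in> (\<lambda>i. 2 * i) ` {1..N div 2}" by blast
  qed
  have inj: "inj_on (\<lambda>i. 2 * i) {1..N div 2}" by (auto simp: inj_on_def)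
  have "(\<Prod>i\<in>{1..N} - {i. odd i}. 1 - X i) = (\<Prod>i\<in>{1..N div 2}. 1 - X (2 * i))"
    unfolding img[symmetric] prod.reindex[OF inj] by (simp add: o_def)
  also have "\<dots> = (\<Prod>i\<in>{1..N div 2}. (1 - X i) * (1 + X i))"
  proof (rule prod.cong[OF refl])
    fix i
    have "X (2 * i) = X i * X i" by (simp add: mult_monom mult_2)
    then show "1 - X (2 * i) = (1 - X i) * (1 + X i)" by (simp add: algebra_simps)
  qed
  finally show ?thesis .
qed

lemma qpoly: "(\<Prod>i\<in>{1..N}. 1 - X i) = Pr N * Dr N"
proof (induction N rule: less_induct)
  case (less N)
  show ?case
  proof (cases "N = 0")
    case True then show ?thesis by (simp add: Pr_0 Dr_0)
  next
    case False
    have "(\<Prod>i\<in>{1..N}. 1 - X i) = (\<Prod>i\<in>{1..N} \<inter> {i. odd i}. 1 - X i) * (\<Prod>i\<in>{1..N} - {i. odd i}. 1 - X i)"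
      by (rule prod.Int_Diff) simp
    also have "(\<Prod>i\<in>{1..N} - {i. odd i}. 1 - X i) = (\<Prod>i\<in>{1..N div 2}. 1 + X i) * (\<Prod>i\<in>{1..N div 2}. 1 - X i)"
      unfolding even_part by (simp add: prod.distrib mult.commute)
    also have "(\<Prod>i\<in>{1..N div 2}. 1 - X i) = Pr (N div 2) * Dr (N div 2)"
      using less[of "N div 2"] False by simp
    finally show ?thesis using False by (subst Pr.simps, subst Dr.simps) (simp add: algebra_simps)
  qed
qed

lemma Dr_dvd: "a \<le> b \<Longrightarrow> Dr a dvd Dr b"
proof (induction b arbitrary: a rule: less_induct)
  case (less b)
  show ?case
  proof (cases "a = 0")
    case True then show ?thesis by (simp add: Dr_0)
  next
    case False
    then have b0: "b \<noteq> 0" using less.prems by auto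
    have "(\<Prod>i\<in>{1..a} \<inter> {i. odd i}. 1 - X i) dvd (\<Prod>i\<in>{1..b} \<inter> {i. odd i}. 1 - X i)"
      by (rule prod_dvd_prod_subset) (use less.prems in auto)
    moreover have "Dr (a div 2) dvd Dr (b div 2)"
      using less.IH[of "b div 2" "a div 2"] b0 less.prems by (simp add: div_le_mono)
    ultimately show ?thesis using False b0 by (subst Dr.simps, subst (2) Dr.simps) (simp add: mult_dvd_mono)
  qed
qed

lemma odd_pow_dvd:
  fixes a :: "'a::comm_ring_1"
  shows "(a + 1) dvd (a ^ (2 * t + 1) + 1)"
proof (induction t)
  case 0 then show ?case by simp
next
  case (Suc t)
  have "a ^ (2 * Suc t + 1) + 1 = a^2 * (a ^ (2 * t + 1) + 1) - (a - 1) * (a + 1)"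
    by (simp add: algebra_simps power2_eq_square)
  then show ?case using Suc by (simp add: dvd_diff)
qed

lemma one_minus_pow_dvd:
  fixes a :: "'a::comm_ring_1"
  shows "(1 - a) dvd (1 - a ^ i)"
proof (induction i)
  case 0 then show ?case by simp
next
  case (Suc i)
  have "1 - a ^ Suc i = (1 - a ^ i) + a ^ i * (1 - a)" by (simp add: algebra_simps)
  moreover have "(1 - a) dvd (1 - a ^ i) + a ^ i * (1 - a)" using Suc by (simp add: dvd_add)
  ultimately show ?case by metis
qed

lemma cop1:
  assumes i: "0 < i" and m: "odd m"
  shows "coprime (1 + X i) (1 - X m)"
proof (rule coprimeI)
  fix c assume c1: "c dvd 1 + X i" and c2: "c dvd 1 - X m"
  obtain t where t: "m = 2 * t + 1" using m oddE by blast
  have "(X i + 1) dvd (X i ^ m + 1)" unfolding t by (rule odd_pow_dvd)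
  then have "(1 + X i) dvd (1 + X (i * m))" by (simp add: monom_power add.commute)
  then have d1: "c dvd 1 + X (i * m)" using c1 dvd_trans by blast
  have "(1 - X m) dvd (1 - X m ^ i)" by (rule one_minus_pow_dvd)
  then have "(1 - X m) dvd (1 - X (i * m))" by (simp add: monom_power mult.commute)
  then have d2: "c dvd 1 - X (i * m)" using c2 dvd_trans by blast
  have "c dvd (1 + X (i * m)) + (1 - X (i * m))" using d1 d2 by (rule dvd_add)
  then have "c dvd 2" by simp
  then have "degree c \<le> degree (2 :: int poly)" by (rule dvd_imp_degree_le) simp
  then have dc: "degree c = 0" by simp
  obtain d where d: "1 + X i = c * d" using c1 by (elim dvdE)
  have "coeff (1 + X i) 0 = 1" using i by simp
  then have "coeff c 0 * coeff d 0 = 1" by (simp add: d coeff_mult_0)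
  then have u: "coeff c 0 dvd 1" by (metis dvdI)
  have "c = [:coeff c 0:]" using degree_0_id[OF dc] by simp
  then show "is_unit c" using u is_unit_const_poly_iff by metis
qed

lemma Pr_cop: "odd m \<Longrightarrow> coprime (Pr N) (1 - X m)"
proof (induction N rule: less_induct)
  case (less N)
  show ?case
  proof (cases "N = 0")
    case True then show ?thesis by (simp add: Pr_0)
  next
    case False
    have "coprime (\<Prod>i\<in>{1..N div 2}. 1 + X i) (1 - X m)"
      by (rule prod_coprime_left) (use cop1 less.prems in auto)
    moreover have "coprime (Pr (N div 2)) (1 - X m)" using less False by simp
    ultimately show ?thesis using False by (subst Pr.simps) simp
  qed
qed

lemma qpoly_split: "t \<le> m \<Longrightarrow> (\<Prod>i\<in>{1..m}. 1 - X i) = (\<Prod>i\<in>{1..t}. 1 - X i) * (\<Prod>i\<in>{t<..m}. 1 - X i)"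
proof -
  assume "t \<le> m"
  then have "{1..m} = {1..t} \<union> {t<..m}" by auto
  moreover have "{1..t} \<inter> {t<..m} = {}" by auto
  ultimately show ?thesis by (simp add: prod.union_disjoint)
qed

lemma Pr_dvd_Ap: "Pr N dvd Ap N"
proof (induction N rule: less_induct)
  case (less N)
  show ?case
  proof (cases N)
    case 0 then show ?thesis by (simp add: Pr_0)
  next
    case (Suc n)
    let ?E = "{j. j \<le> n \<and> even j}"
    have trm: "Pr (n+1) dvd Ap (n-j) * (\<Prod>i\<in>{n-j<..n+1}. 1 - X i)" if j: "j \<in> ?E" for j
    proof -
      have "Pr (n-j) dvd Ap (n-j)" using less.IH[of "n-j"] Suc by simp
      then obtain B where B: "Ap (n-j) = Pr (n-j) * B" by (elim dvdE)
      have "Dr (n-j) dvd Dr (n+1)" using Dr_dvd[of "n-j" "n+1"] by simp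
      then obtain T where T: "Dr (n+1) = Dr (n-j) * T" by (elim dvdE)
      have "Dr (n-j) * (Ap (n-j) * (\<Prod>i\<in>{n-j<..n+1}. 1 - X i))
          = B * ((Pr (n-j) * Dr (n-j)) * (\<Prod>i\<in>{n-j<..n+1}. 1 - X i))" by (simp add: B algebra_simps)
      also have "\<dots> = B * (\<Prod>i\<in>{1..n+1}. 1 - X i)"
        using qpoly_split[of "n-j" "n+1"] qpoly[of "n-j"] by simp
      also have "\<dots> = B * (Pr (n+1) * Dr (n+1))" by (simp only: qpoly)
      also have "\<dots> = Dr (n-j) * (Pr (n+1) * (B * T))" unfolding T by (simp add: algebra_simps)
      finally have "Ap (n-j) * (\<Prod>i\<in>{n-j<..n+1}. 1 - X i) = Pr (n+1) * (B * T)"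
        using Dr_ne[of "n-j"] by simp
      then show ?thesis by simp
    qed
    have "Pr (n+1) dvd (\<Sum>j\<in>?E. of_nat ((n choose j) * EE j) * Ap (n-j) *
        (\<Prod>i\<in>{n-j<..n+1}. 1 - X i) * (\<Prod>j'\<in>?E - {j}. 1 - X (j'+1)))"
    proof (rule dvd_sum)
      fix j assume j: "j \<in> ?E"
      have "Pr (n+1) dvd of_nat ((n choose j) * EE j) * (Ap (n-j) * (\<Prod>i\<in>{n-j<..n+1}. 1 - X i)) * (\<Prod>j'\<in>?E - {j}. 1 - X (j'+1))"
        using trm[OF j] by (rule dvd_mult2[OF dvd_mult])
      then show "Pr (n+1) dvd of_nat ((n choose j) * EE j) * Ap (n-j) *
        (\<Prod>i\<in>{n-j<..n+1}. 1 - X i) * (\<Prod>j'\<in>?E - {j}. 1 - X (j'+1))" by (simp add: mult.assoc)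
    qed
    then have "Pr (n+1) dvd Ap (n+1) * (\<Prod>j\<in>?E. 1 - X (j+1))" by (simp only: poly_identity)
    moreover have "coprime (Pr (n+1)) (\<Prod>j\<in>?E. 1 - X (j+1))"
      by (rule prod_coprime_right) (auto intro: Pr_cop)
    ultimately have "Pr (n+1) dvd Ap (n+1)" using coprime_dvd_mult_left_iff by blast
    then show ?thesis using Suc by simp
  qed
qed

lemma G_Pr: "N < 2 ^ Suc L \<Longrightarrow> (\<Prod>k\<in>{1..L}. \<Prod>i\<in>{1..N div 2^k}. 1 + X i) = Pr N"
proof (induction L arbitrary: N)
  case 0
  then have "N div 2 = 0" by simp
  then show ?case by (subst Pr.simps) (simp add: Pr_0)
next
  case (Suc L)
  have h: "N div 2 < 2 ^ Suc L" using Suc.prems by simp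
  have "(\<Prod>k\<in>{1..Suc L}. \<Prod>i\<in>{1..N div 2^k}. 1 + X i)
      = (\<Prod>i\<in>{1..N div 2}. 1 + X i) * (\<Prod>k\<in>{Suc 1..Suc L}. \<Prod>i\<in>{1..N div 2^k}. 1 + X i)"
    by (simp add: prod.atLeast_Suc_atMost)
  also have "(\<Prod>k\<in>{Suc 1..Suc L}. \<Prod>i\<in>{1..N div 2^k}. 1 + X i) = (\<Prod>k\<in>{1..L}. \<Prod>i\<in>{1..(N div 2) div 2^k}. 1 + X i)"
    unfolding prod.shift_bounds_cl_Suc_ivl by (simp add: div_mult2_eq)
  also have "\<dots> = Pr (N div 2)" by (rule Suc.IH[OF h])
  finally show ?case
    by (cases "N = 0") (simp_all add: Pr.simps[of N] Pr_0)
qed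

lemma log_bound:
  assumes n: "1 \<le> n"
  shows "n < 2 ^ Suc (nat \<lfloor>log 2 (real n)\<rfloor>)"
proof -
  let ?L = "nat \<lfloor>log 2 (real n)\<rfloor>"
  have l0: "log 2 (real n) \<ge> 0" using n by simp
  have "real ?L = of_int \<lfloor>log 2 (real n)\<rfloor>" using l0 by simp
  then have a: "log 2 (real n) < real ?L + 1" by linarith
  have lp: "log 2 ((2::real) ^ m) = real m" for m by (simp add: log_nat_power)
  have "real ?L + 1 = log 2 (2 ^ Suc ?L)" unfolding lp by simp
  then have "log 2 (real n) < log 2 (2 ^ Suc ?L)" using a by simp
  then have "real n < 2 ^ Suc ?L" using n by (subst (asm) log_less_cancel_iff) auto
  then show ?thesis by (metis of_nat_less_iff of_nat_numeral of_nat_power)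
qed

lemma reflect_1X: "0 < i \<Longrightarrow> reflect_poly (1 + X i) = 1 + X i"
proof -
  assume i: "0 < i"
  have dg: "degree (1 + X i) = i"
    using i by (subst degree_add_eq_right) (simp_all add: degree_monom_eq)
  show ?thesis
  proof (rule poly_eqI)
    fix k
    show "coeff (reflect_poly (1 + X i)) k = coeff (1 + X i) k"
      unfolding coeff_reflect_poly dg using i by (auto simp: coeff_1)
  qed
qed

lemma reflect_Pr: "reflect_poly (Pr N) = Pr N"
proof (induction N rule: less_induct)
  case (less N)
  show ?case
  proof (cases "N = 0")
    case True then show ?thesis by (simp add: Pr_0)
  next
    case False
    have "reflect_poly (\<Prod>i\<in>{1..N div 2}. 1 + X i) = (\<Prod>i\<in>{1..N div 2}. 1 + X i)"
      unfolding reflect_poly_prod by (rule prod.cong) (auto simp: reflect_1X)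
    then show ?thesis using less[of "N div 2"] False by (subst (1 2) Pr.simps) (simp add: reflect_poly_mult)
  qed
qed

theorem theorem1p2:
  fixes n :: nat
  assumes "n \<ge> 1"
  shows "\<exists>E :: int poly.
           palindromic E \<and> coeff E 0 = int (euler_number n) \<and>
           (\<Sum>p\<in>{p. p permutes {1..n}}. monom 1 (altmaj n p)) =
             E * (\<Prod>k\<in>{1..nat \<lfloor>log 2 (real n)\<rfloor>}. \<Prod>i\<in>{1..n div 2^k}. 1 + monom 1 i)"
proof -
  have P: "(\<Prod>k\<in>{1..nat \<lfloor>log 2 (real n)\<rfloor>}. \<Prod>i\<in>{1..n div 2^k}. 1 + monom 1 i) = Pr n"
    by (rule G_Pr[OF log_bound[OF assms]])
  obtain E where E: "Ap n = Pr n * E" using Pr_dvd_Ap[of n] by (elim dvdE)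
  have "Pr n * E = Pr n * reflect_poly E"
  proof -
    have "Pr n * E = reflect_poly (Ap n)" using reflect_Ap[of n] E by metis
    also have "\<dots> = Pr n * reflect_poly E" unfolding E reflect_poly_mult reflect_Pr ..
    finally show ?thesis .
  qed
  then have rE: "reflect_poly E = E" using Pr_ne[of n] by simp
  have pal: "palindromic E"
    unfolding palindromic_def
  proof (intro allI impI)
    fix i assume "i \<le> degree E"
    then have "coeff (reflect_poly E) i = coeff E (degree E - i)" by (simp add: coeff_reflect_poly)
    then show "coeff E i = coeff E (degree E - i)" using rE by simp
  qed
  have c0: "coeff E 0 = int (euler_number n)"
  proof -
    have "coeff (Pr n) 0 = 1" using poly_Pr_0[of n] by (simp add: poly_0_coeff_0)
    then have "coeff (Ap n) 0 = coeff E 0" unfolding E coeff_mult_0 by simp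
    then show ?thesis using coeff_Ap_0 by simp
  qed
  have "(\<Sum>p\<in>{p. p permutes {1..n}}. monom 1 (altmaj n p)) = E * Pr n"
    using E by (simp add: Ap_def mult.commute)
  then show ?thesis using pal c0 P by auto
qed

end
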